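(* Let $k,n\ge 1$ be integers, $m=kn-1$, and equip $\mathbb P_m\mathbb C$ with the metric $g$ and group $G_{n,k}$ described in the context (for some fixed constant $a_m>0$). Let $\varphi\in C^\infty(\mathbb P_m\mathbb C)$ be $g$-admissible and $G_{n,k}$-invariant, with $\sup_{\mathbb P_m\mathbb C}\varphi=0$. Then $\varphi\ge\psi$ on $\mathbb P_m\mathbb C$, where $$\psi([z_0,\dots,z_m])=\ln\frac{(|z_0|\cdots|z_m|)^{2a_m/(m+1)}}{(|z_0|^2+\cdots+|z_m|^2)^{a_m}}$$ (with $\psi=-\infty$ where some $z_p=0$).
   Context: Homogeneous coordinates on $\mathbb P_m\mathbb C$, $m=kn-1$, are written $[z_0,\dots,z_m]=[Z_0,\dots,Z_{k-1}]$ with blocks $Z_h=(z_{hn},\dots,z_{(h+1)n-1})\in\mathbb C^n$, $h=0,\dots,k-1$. The metric $g$ is $a_m$ times the Fubini–Study metric: in the chart $\{z_0\neq0\}$ (with $z_0=1$) its components are $g_{\lambda\bar\mu}=a_m\,\partial^2\ln(1+|z_1|^2+\cdots+|z_m|^2)/\partial z_\lambda\partial\bar z_\mu$, and similarly in the other standard charts. A function $\varphi\in C^\infty(\mathbb P_m\mathbb C)$ is $g$-admissible if the Hermitian matrix $g_{\lambda\bar\mu}+\partial^2\varphi/\partial z_\lambda\partial\bar z_\mu$ is positive definite everywhere (in local holomorphic coordinates). $G_{n,k}$ is the group of automorphisms of $\mathbb P_m\mathbb C$ generated by: the block swaps $[Z_0,\dots,Z_i,\dots,Z_j,\dots,Z_{k-1}]\mapsto[Z_0,\dots,Z_j,\dots,Z_i,\dots,Z_{k-1}]$;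 the phase rotations multiplying a single homogeneous coordinate $z_p$ by $e^{i\theta}$ ($\theta\in\mathbb R$); and the transpositions exchanging $z_p$ and $z_q$ whenever $z_p,z_q$ belong to the same block $Z_h$. The function $\psi$ is homogeneous of degree $0$, hence well defined on $\mathbb P_m\mathbb C$. *)

theory Defs
  imports "HOL-Analysis.Analysis"
begin

fun dd :: "'a::real_normed_vector list \<Rightarrow> ('a \<Rightarrow> 'b::real_normed_vector) \<Rightarrow> 'a \<Rightarrow> 'b" where
  "dd [] f = f"
| "dd (v # vs) f = (\<lambda>x. vector_derivative (\<lambda>t::real. dd vs f (x + t *\<^sub>R v)) (at 0))"

definition smooth_on :: "'a::euclidean_space set \<Rightarrow> ('a \<Rightarrow> 'b::real_normed_vector) \<Rightarrow> bool" where
  "smooth_on S f \<longleftrightarrow>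
     (\<forall>vs. set vs \<subseteq> Basis \<longrightarrow>
        continuous_on S (dd vs f) \<and>
        (\<forall>v\<in>Basis. \<forall>x\<in>S. (\<lambda>t::real. dd vs f (x + t *\<^sub>R v)) differentiable (at 0)))"

definition dz :: "'d::finite \<Rightarrow> (complex^'d \<Rightarrow> complex) \<Rightarrow> complex^'d \<Rightarrow> complex" where
  "dz p F = (\<lambda>z. (dd [axis p 1] F z - \<i> * dd [axis p \<i>] F z) / 2)"

definition dzbar :: "'d::finite \<Rightarrow> (complex^'d \<Rightarrow> complex) \<Rightarrow> complex^'d \<Rightarrow> complex" where
  "dzbar p F = (\<lambda>z. (dd [axis p 1] F z + \<i> * dd [axis p \<i>] F z) / 2)"

definition pos_def_herm :: "('d \<Rightarrow> 'd \<Rightarrow> complex) \<Rightarrow> 'd set \<Rightarrow> bool" where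
  "pos_def_herm H I \<longleftrightarrow>
     (\<forall>l\<in>I. \<forall>m\<in>I. H m l = cnj (H l m)) \<and>
     (\<forall>\<xi>::'d \<Rightarrow> complex. (\<forall>p. p \<notin> I \<longrightarrow> \<xi> p = 0) \<and> (\<exists>p\<in>I. \<xi> p \<noteq> 0) \<longrightarrow>
        0 < Re (\<Sum>l\<in>I. \<Sum>m\<in>I. H l m * \<xi> l * cnj (\<xi> m)))"

text \<open>Functions on P_m C are represented by their lifts Phi to C^(m+1) - {0},
  homogeneous of degree 0.  Coordinates are indexed by pairs (h, c), h the block
  index (CARD('b) = k blocks), c the position in the block (CARD('c) = n).\<close>
definition proj_fun :: "(complex^'d::finite \<Rightarrow> real) \<Rightarrow> bool" where
  "proj_fun \<Phi> \<longleftrightarrow> (\<forall>z c. z \<noteq> 0 \<longrightarrow> c \<noteq> 0 \<longrightarrow> \<Phi> (c *s z) = \<Phi> z)"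

text \<open>Fubini--Study potential in the standard chart {z_j = 1}.\<close>
definition fs_pot :: "'d::finite \<Rightarrow> complex^'d \<Rightarrow> complex" where
  "fs_pot j = (\<lambda>w. complex_of_real (ln (1 + (\<Sum>p\<in>-{j}. (cmod (w $ p))\<^sup>2))))"

text \<open>g-admissibility, g = a times Fubini--Study, tested in every standard chart
  {z_j = 1} with local coordinates z_l, l \<noteq> j.\<close>
definition admissible :: "real \<Rightarrow> (complex^'d::finite \<Rightarrow> real) \<Rightarrow> bool" where
  "admissible a \<Phi> \<longleftrightarrow>
     (\<forall>j z. z $ j = 1 \<longrightarrow>
        pos_def_herm
          (\<lambda>l m. of_real a * dz l (dzbar m (fs_pot j)) z
                 + dz l (dzbar m (\<lambda>w. complex_of_real (\<Phi> w))) z) (-{j}))"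

definition swp :: "'a \<Rightarrow> 'a \<Rightarrow> 'a \<Rightarrow> 'a" where
  "swp i j x = (if x = i then j else if x = j then i else x)"

text \<open>Invariance under the generators of G_{n,k}.\<close>
definition G_invariant :: "(complex^('b::finite \<times> 'c::finite) \<Rightarrow> real) \<Rightarrow> bool" where
  "G_invariant \<Phi> \<longleftrightarrow>
     (\<forall>i j z. \<Phi> (\<chi> q. z $ (swp i j (fst q), snd q)) = \<Phi> z) \<and>
     (\<forall>p \<theta> z. \<Phi> (\<chi> q. if q = p then cis \<theta> * z $ q else z $ q) = \<Phi> z) \<and>
     (\<forall>h c d z. \<Phi> (\<chi> q. if fst q = h then z $ (h, swp c d (snd q)) else z $ q) = \<Phi> z)"

definition psi :: "real \<Rightarrow> complex^'d::finite \<Rightarrow> real" where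
  "psi a z = ln ((\<Prod>p\<in>UNIV. cmod (z $ p)) powr (2 * a / real CARD('d))
                 / (\<Sum>p\<in>UNIV. (cmod (z $ p))\<^sup>2) powr a)"

end

theory Submission
  imports Defs
begin


definition curve :: "'d set \<Rightarrow> complex^'d::finite \<Rightarrow> ('d \<Rightarrow> real \<Rightarrow> real) \<Rightarrow> real \<Rightarrow> complex^'d" where
  "curve P y0 \<sigma> t = (\<chi> p. if p \<in> P then complex_of_real (\<sigma> p t) else y0 $ p)"

lemma norm_axis_c: "norm (\<zeta> *\<^sub>R axis q (1::complex)) = \<bar>\<zeta>\<bar>"
proof -
  have "axis q (1::complex) \<in> Basis" by (simp add: axis_in_Basis_iff)
  then have "norm (axis q (1::complex)) = 1" by (rule norm_Basis)
  then show ?thesis by simp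
qed

lemma axis_scale_nth: "(r *\<^sub>R axis q (1::complex)) $ p = (if p = q then complex_of_real r else 0)"
  by (auto simp: axis_def of_real_def)

lemma mvt_dir:
  fixes f :: "complex^'d::finite \<Rightarrow> real"
  assumes fd: "\<And>\<zeta>. \<bar>\<zeta>\<bar> \<le> \<bar>\<Delta>\<bar> \<Longrightarrow> ((\<lambda>s. f ((c + \<zeta> *\<^sub>R u) + s *\<^sub>R u)) has_real_derivative D (c + \<zeta> *\<^sub>R u)) (at 0)"
    and "\<Delta> \<noteq> 0"
  shows "\<exists>z. \<bar>z\<bar> < \<bar>\<Delta>\<bar> \<and> f (c + \<Delta> *\<^sub>R u) - f c = \<Delta> * D (c + z *\<^sub>R u)"
proof -
  define F where "F \<zeta> = f (c + \<zeta> *\<^sub>R u)" for \<zeta>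
  have dF: "DERIV F \<zeta> :> D (c + \<zeta> *\<^sub>R u)" if "\<bar>\<zeta>\<bar> \<le> \<bar>\<Delta>\<bar>" for \<zeta>
  proof -
    have "((\<lambda>s. F (s + \<zeta>)) has_real_derivative D (c + \<zeta> *\<^sub>R u)) (at 0)"
      using fd[OF that] by (simp add: F_def algebra_simps scaleR_add_left)
    then show ?thesis using DERIV_shift[of F _ 0 \<zeta>] by simp
  qed
  show ?thesis
  proof (cases "\<Delta> > 0")
    case True
    have "\<exists>z>0. z < \<Delta> \<and> F \<Delta> - F 0 = (\<Delta> - 0) * D (c + z *\<^sub>R u)"
      by (rule MVT2[OF True]) (use dF True in auto)
    then obtain z where "0 < z" "z < \<Delta>" "F \<Delta> - F 0 = (\<Delta> - 0) * D (c + z *\<^sub>R u)" by blast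
    then show ?thesis by (intro exI[of _ z]) (auto simp: F_def)
  next
    case False
    then have lt: "\<Delta> < 0" using assms(2) by auto
    have "\<exists>z>\<Delta>. z < 0 \<and> F 0 - F \<Delta> = (0 - \<Delta>) * D (c + z *\<^sub>R u)"
      by (rule MVT2[OF lt]) (use dF lt in auto)
    then obtain z where "\<Delta> < z" "z < 0" "F 0 - F \<Delta> = (0 - \<Delta>) * D (c + z *\<^sub>R u)" by blast
    then show ?thesis using lt by (intro exI[of _ z]) (auto simp: F_def algebra_simps)
  qed
qed

lemma curve_isCont:
  assumes "\<And>p. p \<in> P \<Longrightarrow> isCont (\<sigma> p) t0"
  shows "isCont (curve P y0 \<sigma>) t0"
  unfolding curve_def continuous_at
  by (intro tendsto_vec_lambda) (auto intro!: tendsto_of_real assms[unfolded continuous_at])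

lemma chain:
  fixes f :: "complex^'d::finite \<Rightarrow> real"
  assumes S: "open S"
   and fd: "\<And>y p. y \<in> S \<Longrightarrow> p \<in> P \<Longrightarrow> ((\<lambda>s. f (y + s *\<^sub>R axis p 1)) has_real_derivative D p y) (at 0)"
   and Dc: "\<And>p. p \<in> P \<Longrightarrow> continuous_on S (D p)"
   and fin: "finite P"
   and sd: "\<And>p. p \<in> P \<Longrightarrow> (\<sigma> p has_real_derivative \<sigma>' p) (at t0)"
   and inS: "curve P y0 \<sigma> t0 \<in> S"
  shows "((\<lambda>t. f (curve P y0 \<sigma> t)) has_real_derivative (\<Sum>p\<in>P. D p (curve P y0 \<sigma> t0) * \<sigma>' p)) (at t0)"
  using fin fd Dc sd inS
proof (induction P arbitrary: y0)
  case empty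
  then show ?case by (simp add: curve_def)
next
  case (insert q P)
  define y1 where "y1 = (\<chi> p. if p = q then complex_of_real (\<sigma> q t0) else y0 $ p)"
  define ct where "ct = curve P y1 \<sigma>"
  define c0 where "c0 = curve (insert q P) y0 \<sigma> t0"
  define u where "u = (axis q 1 :: complex^'d)"
  have c_eq: "curve (insert q P) y0 \<sigma> t = ct t + (\<sigma> q t - \<sigma> q t0) *\<^sub>R u" for t
    using insert(2) by (auto simp: vec_eq_iff curve_def ct_def y1_def u_def axis_def of_real_def scaleR_left_diff_distrib)
  have ct0: "ct t0 = c0"
    using insert(2) by (auto simp: vec_eq_iff curve_def ct_def y1_def c0_def)
  have c0S: "c0 \<in> S" using insert c0_def by auto
  have IH: "((\<lambda>t. f (ct t)) has_real_derivative (\<Sum>p\<in>P. D p c0 * \<sigma>' p)) (at t0)"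
    using insert.IH[of y1] insert.prems ct0 c0S unfolding ct_def by auto
  define R where "R t = f (ct t + (\<sigma> q t - \<sigma> q t0) *\<^sub>R u) - f (ct t)" for t
  have fdq: "\<And>y. y \<in> S \<Longrightarrow> ((\<lambda>s. f (y + s *\<^sub>R u)) has_real_derivative D q y) (at 0)"
    using insert.prems(1) u_def by auto
  have sq: "DERIV (\<sigma> q) t0 :> \<sigma>' q" using insert.prems(3) by auto
  from sq obtain g where g: "\<And>z. \<sigma> q z - \<sigma> q t0 = g z * (z - t0)" "isCont g t0" "g t0 = \<sigma>' q"
    unfolding CARAT_DERIV by blast
  define M where "M t = (if \<sigma> q t = \<sigma> q t0 then D q c0 else R t / (\<sigma> q t - \<sigma> q t0))" for t
  have RM: "R t = M t * (\<sigma> q t - \<sigma> q t0)" for t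
    by (auto simp: M_def R_def)
  have Mc: "isCont M t0"
    unfolding continuous_at_eps_delta
  proof (intro allI impI)
    fix \<epsilon> :: real assume "\<epsilon> > 0"
    have "isCont (D q) c0"
      using insert.prems(2)[of q] c0S S continuous_on_eq_continuous_at by blast
    then obtain d1 where d1: "d1 > 0" "\<And>y. dist y c0 < d1 \<Longrightarrow> dist (D q y) (D q c0) < \<epsilon>"
      using \<open>\<epsilon> > 0\<close> unfolding continuous_at_eps_delta by blast
    obtain d0 where d0: "d0 > 0" "ball c0 d0 \<subseteq> S" using S c0S open_contains_ball by blast
    define d where "d = min d0 d1"
    have "d > 0" using d0 d1 d_def by auto
    have "isCont ct t0" unfolding ct_def
      by (rule curve_isCont) (use insert.prems(3) DERIV_isCont in blast)
    then obtain e1 where e1: "e1 > 0" "\<And>t. dist t t0 < e1 \<Longrightarrow> dist (ct t) c0 < d/2"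
      using \<open>d > 0\<close> ct0 unfolding continuous_at_eps_delta by (metis half_gt_zero)
    have "isCont (\<sigma> q) t0" using sq DERIV_isCont by blast
    then obtain e2 where e2: "e2 > 0" "\<And>t. dist t t0 < e2 \<Longrightarrow> dist (\<sigma> q t) (\<sigma> q t0) < d/2"
      using \<open>d > 0\<close> unfolding continuous_at_eps_delta by (metis half_gt_zero)
    show "\<exists>\<delta>>0. \<forall>x'. dist x' t0 < \<delta> \<longrightarrow> dist (M x') (M t0) < \<epsilon>"
    proof (intro exI[of _ "min e1 e2"] conjI allI impI)
      show "min e1 e2 > 0" using e1 e2 by auto
      fix t assume "dist t t0 < min e1 e2"
      then have ht: "dist (ct t) c0 < d/2" "\<bar>\<sigma> q t - \<sigma> q t0\<bar> < d/2"
        using e1 e2 by (auto simp: dist_real_def)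
      show "dist (M t) (M t0) < \<epsilon>"
      proof (cases "\<sigma> q t = \<sigma> q t0")
        case True then show ?thesis by (simp add: M_def \<open>\<epsilon> > 0\<close>)
      next
        case False
        define \<Delta> where "\<Delta> = \<sigma> q t - \<sigma> q t0"
        have inb: "dist (ct t + \<zeta> *\<^sub>R u) c0 < d" if "\<bar>\<zeta>\<bar> \<le> \<bar>\<Delta>\<bar>" for \<zeta>
        proof -
          have "dist (ct t + \<zeta> *\<^sub>R u) c0 \<le> dist (ct t) c0 + norm (\<zeta> *\<^sub>R u)"
            by (metis dist_commute dist_triangle_le add_diff_cancel_left' dist_norm order_refl)
          also have "norm (\<zeta> *\<^sub>R u) = \<bar>\<zeta>\<bar>" by (simp add: u_def norm_axis_c)
          finally show ?thesis using ht that \<Delta>_def by linarith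
        qed
        have "\<exists>z. \<bar>z\<bar> < \<bar>\<Delta>\<bar> \<and> f (ct t + \<Delta> *\<^sub>R u) - f (ct t) = \<Delta> * D q (ct t + z *\<^sub>R u)"
        proof (rule mvt_dir)
          fix \<zeta> :: real assume "\<bar>\<zeta>\<bar> \<le> \<bar>\<Delta>\<bar>"
          then have "ct t + \<zeta> *\<^sub>R u \<in> S" using inb d0 d_def by (auto simp: dist_commute)
          then show "((\<lambda>s. f (ct t + \<zeta> *\<^sub>R u + s *\<^sub>R u)) has_real_derivative D q (ct t + \<zeta> *\<^sub>R u)) (at 0)"
            using fdq by blast
        qed (use False \<Delta>_def in auto)
        then obtain z where z: "\<bar>z\<bar> < \<bar>\<Delta>\<bar>" "f (ct t + \<Delta> *\<^sub>R u) - f (ct t) = \<Delta> * D q (ct t + z *\<^sub>R u)" by blast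
        have "M t = D q (ct t + z *\<^sub>R u)" using False z(2) \<Delta>_def by (simp add: M_def R_def)
        moreover have "dist (ct t + z *\<^sub>R u) c0 < d1" using inb[of z] z(1) d_def by auto
        ultimately show ?thesis using d1 by (simp add: M_def)
      qed
    qed
  qed
  have "DERIV R t0 :> D q c0 * \<sigma>' q"
    unfolding CARAT_DERIV
  proof (intro exI[of _ "\<lambda>z. M z * g z"] conjI allI)
    fix z show "R z - R t0 = M z * g z * (z - t0)" using RM[of z] g(1)[of z] by (simp add: R_def)
  next
    show "isCont (\<lambda>z. M z * g z) t0" using Mc g(2) by (intro continuous_intros)
  next
    show "M t0 * g t0 = D q c0 * \<sigma>' q" using g(3) by (simp add: M_def)
  qed
  from DERIV_add[OF IH this]
  have "((\<lambda>t. f (ct t) + R t) has_real_derivative (\<Sum>p\<in>P. D p c0 * \<sigma>' p) + D q c0 * \<sigma>' q) (at t0)" .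
  moreover have "(\<lambda>t. f (ct t) + R t) = (\<lambda>t. f (curve (insert q P) y0 \<sigma> t))"
    using c_eq by (auto simp: R_def)
  ultimately show ?case using insert(1,2) by (simp add: c0_def add.commute)
qed




lemma ax_Basis: "axis p (1::complex) \<in> Basis" "axis p \<i> \<in> Basis"
  by (auto simp: axis_in_Basis_iff Basis_complex_def)

lemma vd_real:
  assumes "(g has_real_derivative D) (at x)"
  shows "vector_derivative g (at x) = D"
  using assms by (simp add: has_real_derivative_iff_has_vector_derivative vector_derivative_at)

lemma diff_real_deriv:
  fixes g :: "real \<Rightarrow> real"
  assumes "g differentiable (at x)"
  shows "(g has_real_derivative vector_derivative g (at x)) (at x)"
  using assms by (simp add: has_real_derivative_iff_has_vector_derivative vector_derivative_works)

lemma D1: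
  fixes \<Phi> :: "complex^'d::finite \<Rightarrow> real"
  assumes sm: "smooth_on (- {0}) \<Phi>" and vs: "set vs \<subseteq> Basis" and v: "v \<in> Basis" and y: "y \<noteq> 0"
  shows "((\<lambda>t. dd vs \<Phi> (y + t *\<^sub>R v)) has_real_derivative dd (v # vs) \<Phi> y) (at 0)"
proof -
  have "(\<lambda>t. dd vs \<Phi> (y + t *\<^sub>R v)) differentiable (at 0)"
    using sm vs v y unfolding smooth_on_def by auto
  then show ?thesis using diff_real_deriv by fastforce
qed

lemma D1s:
  fixes \<Phi> :: "complex^'d::finite \<Rightarrow> real"
  assumes sm: "smooth_on (- {0}) \<Phi>" and vs: "set vs \<subseteq> Basis" and v: "v \<in> Basis" and y: "y + t0 *\<^sub>R v \<noteq> 0"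
  shows "((\<lambda>t. dd vs \<Phi> (y + t *\<^sub>R v)) has_real_derivative dd (v # vs) \<Phi> (y + t0 *\<^sub>R v)) (at t0)"
proof -
  have "((\<lambda>t. dd vs \<Phi> ((y + t0 *\<^sub>R v) + t *\<^sub>R v)) has_real_derivative dd (v # vs) \<Phi> (y + t0 *\<^sub>R v)) (at 0)"
    by (rule D1[OF sm vs v y])
  then have "((\<lambda>t. dd vs \<Phi> (y + (t + t0) *\<^sub>R v)) has_real_derivative dd (v # vs) \<Phi> (y + t0 *\<^sub>R v)) (at 0)"
    by (simp add: algebra_simps scaleR_add_left)
  then show ?thesis using DERIV_shift[of "\<lambda>t. dd vs \<Phi> (y + t *\<^sub>R v)" _ 0 t0] by simp
qed

lemma dd_ofreal:
  fixes f :: "complex^'d::finite \<Rightarrow> real"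
  assumes "(\<lambda>s. f (y + s *\<^sub>R v)) differentiable (at 0)"
  shows "dd [v] (\<lambda>w. complex_of_real (f w)) y = complex_of_real (dd [v] f y)"
proof -
  have "((\<lambda>s. f (y + s *\<^sub>R v)) has_real_derivative dd [v] f y) (at 0)"
    using diff_real_deriv[OF assms] by simp
  then have "((\<lambda>s. complex_of_real (f (y + s *\<^sub>R v))) has_vector_derivative complex_of_real (dd [v] f y)) (at 0)"
    by (rule has_vector_derivative_of_real)
  then show ?thesis by (simp add: vector_derivative_at)
qed

lemma ReH:
  fixes f :: "complex^'d::finite \<Rightarrow> real"
  assumes d1: "\<And>u v t. u \<in> {axis l 1, axis l \<i>} \<Longrightarrow> v \<in> {axis m 1, axis m \<i>} \<Longrightarrow>
                 (\<lambda>s. f ((z + t *\<^sub>R u) + s *\<^sub>R v)) differentiable (at 0)"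
    and d2: "\<And>u v. u \<in> {axis l 1, axis l \<i>} \<Longrightarrow> v \<in> {axis m 1, axis m \<i>} \<Longrightarrow>
                 (\<lambda>t. dd [v] f (z + t *\<^sub>R u)) differentiable (at 0)"
  shows "Re (dz l (dzbar m (\<lambda>w. complex_of_real (f w))) z) = (dd [axis l 1, axis m 1] f z + dd [axis l \<i>, axis m \<i>] f z) / 4"
proof -
  define F where "F = (\<lambda>w. complex_of_real (f w))"
  have zb: "dzbar m F (z + t *\<^sub>R u) = (complex_of_real (dd [axis m 1] f (z + t *\<^sub>R u)) + \<i> * complex_of_real (dd [axis m \<i>] f (z + t *\<^sub>R u))) / 2"
    if "u \<in> {axis l 1, axis l \<i>}" for u t
    unfolding dzbar_def F_def using dd_ofreal[OF d1[OF that]] by simp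
  have dv: "dd [u] (dzbar m F) z = (complex_of_real (dd [u, axis m 1] f z) + \<i> * complex_of_real (dd [u, axis m \<i>] f z)) / 2"
    if u: "u \<in> {axis l 1, axis l \<i>}" for u
  proof -
    have h1: "((\<lambda>t. dd [v] f (z + t *\<^sub>R u)) has_real_derivative dd [u, v] f z) (at 0)"
      if "v \<in> {axis m 1, axis m \<i>}" for v
      using diff_real_deriv[OF d2[OF u that]] by simp
    have "((\<lambda>t. (complex_of_real (dd [axis m 1] f (z + t *\<^sub>R u)) + \<i> * complex_of_real (dd [axis m \<i>] f (z + t *\<^sub>R u))) / 2)
          has_vector_derivative (complex_of_real (dd [u, axis m 1] f z) + \<i> * complex_of_real (dd [u, axis m \<i>] f z)) / 2) (at 0)"
      by (intro has_vector_derivative_divide has_vector_derivative_add has_vector_derivative_mult_right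
          has_vector_derivative_of_real h1) auto
    note vd = vector_derivative_at[OF this]
    have fe: "(\<lambda>t. dzbar m F (z + t *\<^sub>R u)) = (\<lambda>t. (complex_of_real (dd [axis m 1] f (z + t *\<^sub>R u)) + \<i> * complex_of_real (dd [axis m \<i>] f (z + t *\<^sub>R u))) / 2)"
      using zb[OF u] by auto
    have "dd [u] (dzbar m F) z = vector_derivative (\<lambda>t. dzbar m F (z + t *\<^sub>R u)) (at 0)" by simp
    also have "\<dots> = (complex_of_real (dd [u, axis m 1] f z) + \<i> * complex_of_real (dd [u, axis m \<i>] f z)) / 2"
      unfolding fe by (rule vd)
    finally show ?thesis .
  qed
  have "dz l (dzbar m F) z = (dd [axis l 1] (dzbar m F) z - \<i> * dd [axis l \<i>] (dzbar m F) z) / 2"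
    by (simp add: dz_def)
  also have "\<dots> = ((complex_of_real (dd [axis l 1, axis m 1] f z) + \<i> * complex_of_real (dd [axis l 1, axis m \<i>] f z)) / 2
      - \<i> * ((complex_of_real (dd [axis l \<i>, axis m 1] f z) + \<i> * complex_of_real (dd [axis l \<i>, axis m \<i>] f z)) / 2)) / 2"
    using dv[of "axis l 1"] dv[of "axis l \<i>"] by (simp only: insert_iff simp_thms)
  finally have "dz l (dzbar m F) z = ((complex_of_real (dd [axis l 1, axis m 1] f z) + \<i> * complex_of_real (dd [axis l 1, axis m \<i>] f z)) / 2
      - \<i> * ((complex_of_real (dd [axis l \<i>, axis m 1] f z) + \<i> * complex_of_real (dd [axis l \<i>, axis m \<i>] f z)) / 2)) / 2" .
  then show ?thesis unfolding F_def by (simp only: ) (simp add: field_simps)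
qed




lemma chart_nz: "(y::complex^'d::finite) $ j = 1 \<Longrightarrow> y \<noteq> 0"
  by auto

lemma sm_diff:
  assumes "smooth_on (- {0}) \<Phi>" "set vs \<subseteq> Basis" "v \<in> Basis" "x \<noteq> 0"
  shows "(\<lambda>t. dd vs \<Phi> (x + t *\<^sub>R v)) differentiable (at 0)"
  using assms unfolding smooth_on_def by blast

lemma sm_cont:
  assumes "smooth_on (- {0}) \<Phi>" "set vs \<subseteq> Basis"
  shows "continuous_on (- {0}) (dd vs \<Phi>)"
  using assms unfolding smooth_on_def by blast

lemma ReH_Phi:
  fixes \<Phi> :: "complex^'d::finite \<Rightarrow> real"
  assumes sm: "smooth_on (- {0}) \<Phi>" and z: "z $ j = 1" and l: "l \<noteq> j" and m: "m \<noteq> j"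
  shows "Re (dz l (dzbar m (\<lambda>w. complex_of_real (\<Phi> w))) z) = (dd [axis l 1, axis m 1] \<Phi> z + dd [axis l \<i>, axis m \<i>] \<Phi> z) / 4"
proof (rule ReH)
  fix u v t assume u: "u \<in> {axis l 1, axis l \<i>}" and v: "v \<in> {axis m 1, axis m \<i>}"
  have "(z + t *\<^sub>R u) $ j = 1" using u z l by (auto simp: axis_def)
  then have "z + t *\<^sub>R u \<noteq> 0" by (rule chart_nz)
  moreover have "v \<in> Basis" using v ax_Basis by auto
  ultimately have "(\<lambda>s. dd [] \<Phi> ((z + t *\<^sub>R u) + s *\<^sub>R v)) differentiable (at 0)"
    using sm_diff[OF sm, of "[]"] by auto
  then show "(\<lambda>s. \<Phi> ((z + t *\<^sub>R u) + s *\<^sub>R v)) differentiable (at 0)" by simp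
next
  fix u v assume u: "u \<in> {axis l 1, axis l \<i>}" and v: "v \<in> {axis m 1, axis m \<i>}"
  have "u \<in> Basis" "v \<in> Basis" using u v ax_Basis by auto
  moreover have "z \<noteq> 0" using z by auto
  ultimately show "(\<lambda>t. dd [v] \<Phi> (z + t *\<^sub>R u)) differentiable (at 0)"
    using sm_diff[OF sm, of "[v]"] by auto
qed

lemma cis_Arg_mult: "cis (- Arg w) * w = complex_of_real (cmod w)"
proof (cases "w = 0")
  case True then show ?thesis by simp
next
  case False
  have nz: "complex_of_real (cmod w) \<noteq> 0" using False by simp
  have "w = complex_of_real (cmod w) * sgn w" using nz by (simp add: sgn_div_norm scaleR_conv_of_real field_simps)
  also have "sgn w = cis (Arg w)" using cis_Arg[OF False] by simp
  finally have "cis (- Arg w) * w = complex_of_real (cmod w) * (cis (- Arg w) * cis (Arg w))"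
    by (metis mult.left_commute)
  also have "cis (- Arg w) * cis (Arg w) = 1" by (simp add: cis_mult)
  finally show ?thesis by simp
qed

lemma rot_lemma:
  fixes \<Phi> :: "complex^'d::finite \<Rightarrow> real"
  assumes rot: "\<forall>p \<theta> z. \<Phi> (\<chi> q. if q = p then cis \<theta> * z $ q else z $ q) = \<Phi> z"
    and ym: "y $ m = complex_of_real r"
  shows "\<Phi> (y + s *\<^sub>R axis m \<i>) = \<Phi> (y + (sqrt (r\<^sup>2 + s\<^sup>2) - r) *\<^sub>R axis m 1)"
proof -
  define w where "w = y + s *\<^sub>R axis m \<i>"
  have wm: "w $ m = Complex r s" using ym by (simp add: w_def axis_def complex_eq_iff)
  have "\<Phi> w = \<Phi> (\<chi> q. if q = m then cis (- Arg (w $ m)) * w $ q else w $ q)"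
    using rot by metis
  also have "(\<chi> q. if q = m then cis (- Arg (w $ m)) * w $ q else w $ q) = y + (sqrt (r\<^sup>2 + s\<^sup>2) - r) *\<^sub>R axis m 1"
  proof -
    have "cis (- Arg (w $ m)) * w $ m = complex_of_real (sqrt (r\<^sup>2 + s\<^sup>2))"
      by (simp add: cis_Arg_mult wm cmod_def)
    then show ?thesis using ym by (auto simp: vec_eq_iff w_def axis_def of_real_def scaleR_left_diff_distrib)
  qed
  finally show ?thesis by (simp add: w_def)
qed

lemma sqrt_deriv0:
  assumes "r > 0"
  shows "((\<lambda>s. sqrt (r\<^sup>2 + s\<^sup>2)) has_real_derivative (t / sqrt (r\<^sup>2 + t\<^sup>2))) (at t)"
proof -
  have pos: "r\<^sup>2 + t\<^sup>2 > 0" using assms by (simp add: add_pos_nonneg)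
  have d1: "((\<lambda>s. r\<^sup>2 + s\<^sup>2) has_real_derivative 2 * t) (at t)"
    by (auto intro!: derivative_eq_intros)
  have d2: "(sqrt has_real_derivative inverse (sqrt (r\<^sup>2 + t\<^sup>2)) / 2) (at (r\<^sup>2 + t\<^sup>2))"
    by (rule DERIV_real_sqrt) (use pos in auto)
  from DERIV_chain2[OF d2 d1] show ?thesis
    by (rule DERIV_cong) (simp add: field_simps)
qed

lemma sqrt_deriv_lemma:
  assumes "r > 0"
  shows "((\<lambda>s. sqrt (r\<^sup>2 + s\<^sup>2) - r) has_real_derivative (t / sqrt (r\<^sup>2 + t\<^sup>2))) (at t)"
  using DERIV_diff[OF sqrt_deriv0[OF assms, of t] DERIV_const] by simp

lemma chart_step_nz: "y $ j = 1 \<Longrightarrow> l \<noteq> j \<Longrightarrow> (y + t *\<^sub>R axis l c) $ j = 1"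
  by (simp add: axis_def)

lemma dy_zero:
  fixes \<Phi> :: "complex^'d::finite \<Rightarrow> real"
  assumes sm: "smooth_on (- {0}) \<Phi>"
    and rot: "\<forall>p \<theta> z. \<Phi> (\<chi> q. if q = p then cis \<theta> * z $ q else z $ q) = \<Phi> z"
    and y: "y $ j = 1" and m: "m \<noteq> j" and ym: "y $ m = complex_of_real r" and r: "r > 0"
  shows "dd [axis m \<i>] \<Phi> y = 0"
proof -
  have eq: "(\<lambda>s. \<Phi> (y + s *\<^sub>R axis m \<i>)) = (\<lambda>s. \<Phi> (y + (sqrt (r\<^sup>2 + s\<^sup>2) - r) *\<^sub>R axis m 1))"
    using rot_lemma[OF rot ym] by auto
  have G: "((\<lambda>u. \<Phi> (y + u *\<^sub>R axis m 1)) has_real_derivative dd [axis m 1] \<Phi> y) (at (sqrt (r\<^sup>2 + 0\<^sup>2) - r))"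
    using D1[OF sm, of "[]" "axis m 1" y] ax_Basis chart_nz[OF y] r by simp
  have "((\<lambda>s. \<Phi> (y + (sqrt (r\<^sup>2 + s\<^sup>2) - r) *\<^sub>R axis m 1)) has_real_derivative dd [axis m 1] \<Phi> y * (0 / sqrt (r\<^sup>2 + 0\<^sup>2))) (at 0)"
    using DERIV_chain2[OF G sqrt_deriv_lemma[OF r, of 0]] by simp
  then have "((\<lambda>s. \<Phi> (y + s *\<^sub>R axis m \<i>)) has_real_derivative 0) (at 0)" unfolding eq by simp
  then show ?thesis by (simp add: vd_real)
qed

lemma dyy_zero:
  fixes \<Phi> :: "complex^'d::finite \<Rightarrow> real"
  assumes sm: "smooth_on (- {0}) \<Phi>"
    and rot: "\<forall>p \<theta> z. \<Phi> (\<chi> q. if q = p then cis \<theta> * z $ q else z $ q) = \<Phi> z"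
    and y: "y $ j = 1" and m: "m \<noteq> j" and l: "l \<noteq> j" and lm: "l \<noteq> m"
    and ym: "y $ m = complex_of_real r" and r: "r > 0"
  shows "dd [axis l \<i>, axis m \<i>] \<Phi> y = 0"
proof -
  have "dd [axis m \<i>] \<Phi> (y + t *\<^sub>R axis l \<i>) = 0" for t
  proof (rule dy_zero[OF sm rot _ m _ r])
    show "(y + t *\<^sub>R axis l \<i>) $ j = 1" using y l by (simp add: axis_def)
    show "(y + t *\<^sub>R axis l \<i>) $ m = complex_of_real r" using ym lm by (simp add: axis_def)
  qed
  then have "(\<lambda>t. dd [axis m \<i>] \<Phi> (y + t *\<^sub>R axis l \<i>)) = (\<lambda>t. 0)" by auto
  then show ?thesis by (simp add: vd_real)
qed

lemma dyy_diag:
  fixes \<Phi> :: "complex^'d::finite \<Rightarrow> real"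
  assumes sm: "smooth_on (- {0}) \<Phi>"
    and rot: "\<forall>p \<theta> z. \<Phi> (\<chi> q. if q = p then cis \<theta> * z $ q else z $ q) = \<Phi> z"
    and y: "y $ j = 1" and l: "l \<noteq> j" and yl: "y $ l = complex_of_real r" and r: "r > 0"
  shows "dd [axis l \<i>, axis l \<i>] \<Phi> y = dd [axis l 1] \<Phi> y / r"
proof -
  define \<rho> where "\<rho> t = sqrt (r\<^sup>2 + t\<^sup>2)" for t
  have \<rho>pos: "\<rho> t > 0" for t using r by (simp add: \<rho>_def add_pos_nonneg)
  have \<rho>0: "\<rho> 0 = r" using r by (simp add: \<rho>_def)
  have step: "dd [axis l \<i>] \<Phi> (y + t *\<^sub>R axis l \<i>) = dd [axis l 1] \<Phi> (y + (\<rho> t - r) *\<^sub>R axis l 1) * (t / \<rho> t)" for t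
  proof -
    have eq: "(\<lambda>s. \<Phi> ((y + t *\<^sub>R axis l \<i>) + s *\<^sub>R axis l \<i>)) = (\<lambda>s. \<Phi> (y + (\<rho> (s + t) - r) *\<^sub>R axis l 1))"
    proof
      fix s
      have "\<Phi> ((y + t *\<^sub>R axis l \<i>) + s *\<^sub>R axis l \<i>) = \<Phi> (y + (s + t) *\<^sub>R axis l \<i>)"
        by (simp add: algebra_simps scaleR_add_left)
      also have "\<dots> = \<Phi> (y + (\<rho> (s + t) - r) *\<^sub>R axis l 1)"
        using rot_lemma[OF rot yl] \<rho>_def by simp
      finally show "\<Phi> ((y + t *\<^sub>R axis l \<i>) + s *\<^sub>R axis l \<i>) = \<Phi> (y + (\<rho> (s + t) - r) *\<^sub>R axis l 1)" .
    qed
    have G: "((\<lambda>u. \<Phi> (y + u *\<^sub>R axis l 1)) has_real_derivative dd [axis l 1] \<Phi> (y + (\<rho> t - r) *\<^sub>R axis l 1)) (at (\<rho> t - r))"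
      using D1s[OF sm, of "[]" "axis l 1" y "\<rho> t - r"] ax_Basis chart_nz[OF chart_step_nz[OF y l]] by simp
    have inner: "((\<lambda>s. \<rho> (s + t) - r) has_real_derivative t / \<rho> t) (at 0)"
      using sqrt_deriv_lemma[OF r, of t] DERIV_shift[of "\<lambda>s. \<rho> s - r" "t / \<rho> t" 0 t] \<rho>_def by simp
    have "((\<lambda>s. \<Phi> (y + (\<rho> (s + t) - r) *\<^sub>R axis l 1)) has_real_derivative
            dd [axis l 1] \<Phi> (y + (\<rho> t - r) *\<^sub>R axis l 1) * (t / \<rho> t)) (at 0)"
      using DERIV_chain2[of "\<lambda>u. \<Phi> (y + u *\<^sub>R axis l 1)", OF _ inner] G by simp
    then show ?thesis unfolding dd.simps eq by (simp add: vd_real)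
  qed
  have A: "((\<lambda>t. dd [axis l 1] \<Phi> (y + (\<rho> t - r) *\<^sub>R axis l 1)) has_real_derivative dd [axis l 1, axis l 1] \<Phi> y * (0 / \<rho> 0)) (at 0)"
  proof -
    have G: "((\<lambda>u. dd [axis l 1] \<Phi> (y + u *\<^sub>R axis l 1)) has_real_derivative dd [axis l 1, axis l 1] \<Phi> y) (at (sqrt (r\<^sup>2 + 0\<^sup>2) - r))"
      using D1[OF sm, of "[axis l 1]" "axis l 1" y] ax_Basis chart_nz[OF y] r by simp
    show ?thesis using DERIV_chain2[OF G sqrt_deriv_lemma[OF r, of 0]] \<rho>_def by simp
  qed
  have B: "((\<lambda>t. t / \<rho> t) has_real_derivative (1 * \<rho> 0 - 0 * (0 / \<rho> 0)) / (\<rho> 0 * \<rho> 0)) (at 0)"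
    using DERIV_divide[OF DERIV_ident sqrt_deriv0[OF r, of 0]] \<rho>pos[of 0] \<rho>_def by simp
  have "((\<lambda>t. dd [axis l 1] \<Phi> (y + (\<rho> t - r) *\<^sub>R axis l 1) * (t / \<rho> t)) has_real_derivative
          dd [axis l 1, axis l 1] \<Phi> y * (0 / \<rho> 0) * (0 / \<rho> 0) + (1 * \<rho> 0 - 0 * (0 / \<rho> 0)) / (\<rho> 0 * \<rho> 0) * dd [axis l 1] \<Phi> (y + (\<rho> 0 - r) *\<^sub>R axis l 1)) (at 0)"
    using DERIV_mult[OF A B] by simp
  then have "((\<lambda>t. dd [axis l \<i>] \<Phi> (y + t *\<^sub>R axis l \<i>)) has_real_derivative dd [axis l 1] \<Phi> y / r) (at 0)"
    unfolding step using \<rho>0 r by simp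
  then show ?thesis by (simp add: vd_real)
qed




definition Qf :: "'d::finite \<Rightarrow> complex^'d \<Rightarrow> real" where
  "Qf j y = 1 + (\<Sum>p\<in>-{j}. (cmod (y $ p))\<^sup>2)"

definition fsr :: "'d::finite \<Rightarrow> complex^'d \<Rightarrow> real" where
  "fsr j y = ln (Qf j y)"

lemma fs_pot_fsr: "fs_pot j = (\<lambda>w. complex_of_real (fsr j w))"
  by (simp add: fs_pot_def fsr_def Qf_def)

lemma Qf_pos: "Qf j y > 0"
  unfolding Qf_def by (simp add: add_pos_nonneg sum_nonneg)

lemma cmod_sq_step: "(cmod (a + complex_of_real s * c))\<^sup>2 = (cmod a)\<^sup>2 + 2 * s * Re (cnj c * a) + s\<^sup>2 * (cmod c)\<^sup>2"
  unfolding cmod_power2 by (simp add: algebra_simps power2_eq_square)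

lemma axis_sc: "(r *\<^sub>R axis q c) $ p = (if p = q then complex_of_real r * c else 0)"
  by (simp only: vector_scaleR_component) (simp add: axis_def scaleR_conv_of_real)

lemma Qf_step:
  assumes "m \<noteq> j" "cmod c = 1"
  shows "Qf j (y + s *\<^sub>R axis m c) = Qf j y + 2 * s * Re (cnj c * y $ m) + s\<^sup>2"
proof -
  have m: "m \<in> -{j}" using assms by auto
  have "(\<Sum>p\<in>-{j}. (cmod ((y + s *\<^sub>R axis m c) $ p))\<^sup>2) =
        (\<Sum>p\<in>-{j}. (cmod (y $ p))\<^sup>2) + ((cmod (y $ m + complex_of_real s * c))\<^sup>2 - (cmod (y $ m))\<^sup>2)"
  proof -
    have "(\<Sum>p\<in>-{j}. (cmod ((y + s *\<^sub>R axis m c) $ p))\<^sup>2) = (\<Sum>p\<in>-{j}. (cmod (y $ p))\<^sup>2 + (if p = m then (cmod (y $ m + complex_of_real s * c))\<^sup>2 - (cmod (y $ m))\<^sup>2 else 0))"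
      by (rule sum.cong) (auto simp del: vector_scaleR_component simp add: axis_sc)
    also have "\<dots> = (\<Sum>p\<in>-{j}. (cmod (y $ p))\<^sup>2) + ((cmod (y $ m + complex_of_real s * c))\<^sup>2 - (cmod (y $ m))\<^sup>2)"
      using m by (simp add: sum.distrib)
    finally show ?thesis .
  qed
  then show ?thesis using assms(2) unfolding Qf_def by (simp add: cmod_sq_step)
qed

lemma fsr_d1:
  assumes "m \<noteq> j" "cmod c = 1"
  shows "((\<lambda>s. fsr j (y + s *\<^sub>R axis m c)) has_real_derivative 2 * Re (cnj c * y $ m) / Qf j y) (at 0)"
proof -
  have eq: "(\<lambda>s. fsr j (y + s *\<^sub>R axis m c)) = (\<lambda>s. ln (Qf j y + 2 * s * Re (cnj c * y $ m) + s\<^sup>2))"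
    using Qf_step[OF assms] by (simp add: fsr_def)
  have "((\<lambda>s. ln (Qf j y + 2 * s * Re (cnj c * y $ m) + s\<^sup>2)) has_real_derivative (2 * Re (cnj c * y $ m) + 2 * 0) / (Qf j y + 2 * 0 * Re (cnj c * y $ m) + 0\<^sup>2)) (at 0)"
    by (rule derivative_eq_intros refl | simp add: Qf_pos)+
  then show ?thesis unfolding eq by simp
qed

lemma fsr_dd1:
  assumes "m \<noteq> j" "cmod c = 1"
  shows "dd [axis m c] (fsr j) y = 2 * Re (cnj c * y $ m) / Qf j y"
  using fsr_d1[OF assms] by (simp add: vd_real)

lemma fsr_d2:
  assumes "m \<noteq> j" "cmod c = 1" "l \<noteq> j" "cmod c' = 1"
  shows "((\<lambda>t. dd [axis m c] (fsr j) (z + t *\<^sub>R axis l c')) has_real_derivative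
           (2 * (if l = m then Re (cnj c * c') else 0) * Qf j z - 2 * Re (cnj c * z $ m) * (2 * Re (cnj c' * z $ l))) / (Qf j z)\<^sup>2) (at 0)"
proof -
  define A where "A = Re (cnj c * z $ m)"
  define B where "B = (if l = m then Re (cnj c * c') else 0)"
  define C where "C = Re (cnj c' * z $ l)"
  define Q where "Q = Qf j z"
  have Qp: "Q > 0" using Qf_pos Q_def by auto
  have eq: "(\<lambda>t. dd [axis m c] (fsr j) (z + t *\<^sub>R axis l c')) = (\<lambda>t. 2 * (A + t * B) / (Q + 2 * t * C + t\<^sup>2))"
  proof
    fix t
    have "Re (cnj c * (z + t *\<^sub>R axis l c') $ m) = A + t * B"
      by (auto simp del: vector_scaleR_component simp add: A_def B_def axis_sc algebra_simps)
    then show "dd [axis m c] (fsr j) (z + t *\<^sub>R axis l c') = 2 * (A + t * B) / (Q + 2 * t * C + t\<^sup>2)"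
      using fsr_dd1[OF assms(1,2)] Qf_step[OF assms(3,4)] by (simp add: Q_def C_def)
  qed
  have "((\<lambda>t. 2 * (A + t * B) / (Q + 2 * t * C + t\<^sup>2)) has_real_derivative
         ((2 * (0 + (1 * B + 0 * 0))) * (Q + 2 * 0 * C + 0\<^sup>2) - 2 * (A + 0 * B) * (0 + (2 * (1 * C + 0 * 0)) + 2 * 0 ^ 1 * 1)) / ((Q + 2 * 0 * C + 0\<^sup>2) * (Q + 2 * 0 * C + 0\<^sup>2))) (at 0)"
    by (rule derivative_eq_intros refl | use Qp in simp)+
  then show ?thesis unfolding eq by (simp add: A_def B_def C_def Q_def power2_eq_square algebra_simps)
qed

lemma ReH_fs:
  assumes z: "z $ j = 1" and l: "l \<noteq> j" and m: "m \<noteq> j"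
  shows "Re (dz l (dzbar m (fs_pot j)) z) =
     ((2 * (if l = m then 1 else 0) * Qf j z - 2 * Re (z $ m) * (2 * Re (z $ l))) +
      (2 * (if l = m then 1 else 0) * Qf j z - 2 * Im (z $ m) * (2 * Im (z $ l)))) / (Qf j z)\<^sup>2 / 4"
proof -
  have c1: "cmod (1::complex) = 1" "cmod \<i> = 1" by auto
  have e: "Re (dz l (dzbar m (\<lambda>w. complex_of_real (fsr j w))) z) = (dd [axis l 1, axis m 1] (fsr j) z + dd [axis l \<i>, axis m \<i>] (fsr j) z) / 4"
  proof (rule ReH)
    fix u v t assume u: "u \<in> {axis l 1, axis l \<i>}" and v: "v \<in> {axis m 1, axis m \<i>}"
    then obtain c where "v = axis m c" "cmod c = 1" using c1 by auto
    then show "(\<lambda>s. fsr j ((z + t *\<^sub>R u) + s *\<^sub>R v)) differentiable (at 0)"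
      using fsr_d1[OF m] real_differentiable_def by blast
  next
    fix u v assume u: "u \<in> {axis l 1, axis l \<i>}" and v: "v \<in> {axis m 1, axis m \<i>}"
    then obtain c c' where "v = axis m c" "cmod c = 1" "u = axis l c'" "cmod c' = 1" using c1 by auto
    then show "(\<lambda>t. dd [v] (fsr j) (z + t *\<^sub>R u)) differentiable (at 0)"
      using fsr_d2[OF m _ l] real_differentiable_def by blast
  qed
  have d1: "dd [axis l 1, axis m 1] (fsr j) z = (2 * (if l = m then 1 else 0) * Qf j z - 2 * Re (z $ m) * (2 * Re (z $ l))) / (Qf j z)\<^sup>2"
    using fsr_d2[OF m c1(1) l c1(1), of z] by (simp add: vd_real)
  have d2: "dd [axis l \<i>, axis m \<i>] (fsr j) z = (2 * (if l = m then 1 else 0) * Qf j z - 2 * Im (z $ m) * (2 * Im (z $ l))) / (Qf j z)\<^sup>2"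
    using fsr_d2[OF m c1(2) l c1(2), of z] by (simp add: vd_real)
  show ?thesis unfolding fs_pot_fsr e d1 d2 using Qf_pos[of j z] by (simp add: field_simps)
qed




lemma quad_identity:
  fixes H :: "'d \<Rightarrow> 'd \<Rightarrow> complex"
  assumes fin: "finite P"
    and ReH: "\<And>l m. l \<in> P \<Longrightarrow> m \<in> P \<Longrightarrow> Re (H l m) =
        a * ((if l = m then 1 / Q else 0) - \<sigma> l * \<sigma> m / Q\<^sup>2) + (D2 l m + (if l = m then D1 l / \<sigma> l else 0)) / 4"
  shows "4 * Re (\<Sum>l\<in>P. \<Sum>m\<in>P. H l m * complex_of_real (s l) * cnj (complex_of_real (s m))) =
     4 * a * ((\<Sum>l\<in>P. (s l)\<^sup>2) / Q - (\<Sum>l\<in>P. \<sigma> l * s l)\<^sup>2 / Q\<^sup>2)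
     + (\<Sum>l\<in>P. \<Sum>m\<in>P. D2 l m * s l * s m) + (\<Sum>l\<in>P. D1 l / \<sigma> l * (s l)\<^sup>2)"
proof -
  have "Re (\<Sum>l\<in>P. \<Sum>m\<in>P. H l m * complex_of_real (s l) * cnj (complex_of_real (s m))) =
        (\<Sum>l\<in>P. \<Sum>m\<in>P. Re (H l m) * s l * s m)"
    by (simp add: Re_sum)
  also have "\<dots> = (\<Sum>l\<in>P. \<Sum>m\<in>P. (a / Q) * (if l = m then s l * s m else 0) - (a / Q\<^sup>2) * ((\<sigma> l * s l) * (\<sigma> m * s m))
                  + (1/4) * (D2 l m * s l * s m) + (1/4) * (if l = m then D1 l / \<sigma> l * s l * s m else 0))"
    by (intro sum.cong refl) (simp add: ReH field_simps)
  also have "\<dots> = (a / Q) * (\<Sum>l\<in>P. (s l)\<^sup>2) - (a / Q\<^sup>2) * (\<Sum>l\<in>P. \<sigma> l * s l)\<^sup>2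
                  + (1/4) * (\<Sum>l\<in>P. \<Sum>m\<in>P. D2 l m * s l * s m) + (1/4) * (\<Sum>l\<in>P. D1 l / \<sigma> l * (s l)\<^sup>2)"
  proof -
    have e1: "(\<Sum>m\<in>P. (if l = m then f m else 0)) = f l" if "l \<in> P" for l and f :: "'d \<Rightarrow> real"
      using fin that by (simp add: sum.delta)
    have p1: "(\<Sum>l\<in>P. \<Sum>m\<in>P. (a / Q) * (if l = m then s l * s m else 0)) = (a / Q) * (\<Sum>l\<in>P. (s l)\<^sup>2)"
    proof -
      have "(\<Sum>l\<in>P. \<Sum>m\<in>P. (a / Q) * (if l = m then s l * s m else 0)) = (\<Sum>l\<in>P. (a / Q) * (\<Sum>m\<in>P. (if l = m then s l * s m else 0)))"
        by (simp add: sum_distrib_left)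
      also have "\<dots> = (\<Sum>l\<in>P. (a / Q) * (s l)\<^sup>2)"
        by (intro sum.cong refl) (simp add: e1 power2_eq_square)
      finally show ?thesis by (simp add: sum_distrib_left)
    qed
    have p2: "(\<Sum>l\<in>P. \<Sum>m\<in>P. (a / Q\<^sup>2) * ((\<sigma> l * s l) * (\<sigma> m * s m))) = (a / Q\<^sup>2) * (\<Sum>l\<in>P. \<sigma> l * s l)\<^sup>2"
    proof -
      have sq: "(\<Sum>l\<in>P. \<sigma> l * s l)\<^sup>2 = (\<Sum>l\<in>P. \<Sum>m\<in>P. (\<sigma> l * s l) * (\<sigma> m * s m))"
        by (simp add: power2_eq_square sum_product)
      show ?thesis unfolding sq by (simp only: sum_distrib_left)
    qed
    have p3: "(\<Sum>l\<in>P. \<Sum>m\<in>P. (1/4) * (D2 l m * s l * s m)) = (1/4) * (\<Sum>l\<in>P. \<Sum>m\<in>P. D2 l m * s l * s m)"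
      by (simp add: sum_distrib_left)
    have p4: "(\<Sum>l\<in>P. \<Sum>m\<in>P. (1/4) * (if l = m then D1 l / \<sigma> l * s l * s m else 0)) = (1/4) * (\<Sum>l\<in>P. D1 l / \<sigma> l * (s l)\<^sup>2)"
    proof -
      have "(\<Sum>l\<in>P. \<Sum>m\<in>P. (1/4) * (if l = m then D1 l / \<sigma> l * s l * s m else 0)) = (\<Sum>l\<in>P. (1/4) * (\<Sum>m\<in>P. (if l = m then D1 l / \<sigma> l * s l * s m else 0)))"
        by (simp add: sum_distrib_left)
      also have "\<dots> = (\<Sum>l\<in>P. (1/4) * (D1 l / \<sigma> l * (s l)\<^sup>2))"
        by (intro sum.cong refl) (simp add: e1 power2_eq_square)
      finally show ?thesis by (simp add: sum_distrib_left)
    qed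
    show ?thesis unfolding sum.distrib sum_subtractf p1 p2 p3 p4 by simp
  qed
  finally show ?thesis by (simp add: field_simps)
qed

lemma lse_derivs:
  fixes x v :: "'d::finite \<Rightarrow> real"
  defines "S \<equiv> \<lambda>t. (\<Sum>p\<in>UNIV. exp (x p + t * v p))"
  defines "S1 \<equiv> \<lambda>t. (\<Sum>p\<in>UNIV. v p * exp (x p + t * v p))"
  defines "S2 \<equiv> \<lambda>t. (\<Sum>p\<in>UNIV. (v p)\<^sup>2 * exp (x p + t * v p))"
  shows "DERIV (\<lambda>t. ln (S t)) t :> S1 t / S t"
    and "DERIV (\<lambda>t. S1 t / S t) t :> S2 t / S t - (S1 t)\<^sup>2 / (S t)\<^sup>2"
proof -
  have Sp: "S t > 0" unfolding S_def by (intro sum_pos) auto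
  have dS: "DERIV S t :> S1 t" unfolding S_def S1_def
    by (rule DERIV_sum) (auto intro!: derivative_eq_intros simp: algebra_simps)
  have dS1: "DERIV S1 t :> S2 t" unfolding S2_def S1_def
    by (rule DERIV_sum) (auto intro!: derivative_eq_intros simp: algebra_simps power2_eq_square)
  show "DERIV (\<lambda>t. ln (S t)) t :> S1 t / S t"
    using DERIV_chain2[OF DERIV_ln_divide[OF Sp] dS] by simp
  show "DERIV (\<lambda>t. S1 t / S t) t :> S2 t / S t - (S1 t)\<^sup>2 / (S t)\<^sup>2"
    using Sp by (intro DERIV_cong[OF DERIV_divide[OF dS1 dS]]) (auto simp: field_simps power2_eq_square)
qed




lemma chart_convex:
  fixes \<Phi> :: "complex^'d::finite \<Rightarrow> real" and x v :: "'d \<Rightarrow> real"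
  assumes sm: "smooth_on (- {0}) \<Phi>"
    and rot: "\<forall>p \<theta> z. \<Phi> (\<chi> q. if q = p then cis \<theta> * z $ q else z $ q) = \<Phi> z"
    and adm: "admissible a \<Phi>" and xj: "x j = 0" and vj: "v j = 0"
  shows "convex_on UNIV (\<lambda>t. a * ln (\<Sum>p\<in>UNIV. exp (x p + t * v p)) + \<Phi> (curve (-{j}) (axis j 1) (\<lambda>p t. exp ((x p + t * v p) / 2)) t))"
proof -
  define \<sigma> where "\<sigma> p t = exp ((x p + t * v p) / 2)" for p t
  define \<sigma>1 where "\<sigma>1 p t = v p / 2 * \<sigma> p t" for p t
  define \<sigma>2 where "\<sigma>2 p t = (v p / 2)\<^sup>2 * \<sigma> p t" for p t
  define c where "c = curve (-{j}) (axis j 1) \<sigma>"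
  define P where "P = - {j}"
  define S where "S t = (\<Sum>p\<in>UNIV. exp (x p + t * v p))" for t
  define S1 where "S1 t = (\<Sum>p\<in>UNIV. v p * exp (x p + t * v p))" for t
  define S2 where "S2 t = (\<Sum>p\<in>UNIV. (v p)\<^sup>2 * exp (x p + t * v p))" for t
  have finP: "finite P" by simp
  have cj: "c t $ j = 1" for t by (simp add: c_def curve_def axis_def)
  have cp: "c t $ p = complex_of_real (\<sigma> p t)" if "p \<noteq> j" for p t using that by (simp add: c_def curve_def)
  have cnz: "c t \<in> - {0}" for t using cj[of t] by auto
  have \<sigma>pos: "\<sigma> p t > 0" for p t by (simp add: \<sigma>_def)
  have d\<sigma>: "DERIV (\<sigma> p) t :> \<sigma>1 p t" for p t
    unfolding \<sigma>_def \<sigma>1_def by (auto intro!: derivative_eq_intros simp: algebra_simps)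
  have d\<sigma>1: "DERIV (\<sigma>1 p) t :> \<sigma>2 p t" for p t
    unfolding \<sigma>1_def \<sigma>2_def using d\<sigma>[of p t] unfolding \<sigma>1_def
    by (auto intro!: derivative_eq_intros simp: power2_eq_square)
  have dPhi: "DERIV (\<lambda>t. \<Phi> (c t)) t :> (\<Sum>p\<in>P. dd [axis p 1] \<Phi> (c t) * \<sigma>1 p t)" for t
    unfolding c_def P_def
  proof (rule chain[where S="- {0}"])
    show "((\<lambda>s. \<Phi> (y + s *\<^sub>R axis p 1)) has_real_derivative dd [axis p 1] \<Phi> y) (at 0)" if "y \<in> - {0}" for y p
      using D1[OF sm, of "[]" "axis p 1" y] ax_Basis that by simp
    show "continuous_on (- {0}) (dd [axis p 1] \<Phi>)" for p
      using sm_cont[OF sm, of "[axis p 1]"] ax_Basis by simp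
  qed (use d\<sigma> cnz[unfolded c_def] in auto)
  have dD: "DERIV (\<lambda>t. dd [axis m 1] \<Phi> (c t)) t :> (\<Sum>l\<in>P. dd [axis l 1, axis m 1] \<Phi> (c t) * \<sigma>1 l t)" for m t
    unfolding c_def P_def
  proof (rule chain[where S="- {0}"])
    show "((\<lambda>s. dd [axis m 1] \<Phi> (y + s *\<^sub>R axis p 1)) has_real_derivative dd [axis p 1, axis m 1] \<Phi> y) (at 0)" if "y \<in> - {0}" for y p
      using D1[OF sm, of "[axis m 1]" "axis p 1" y] ax_Basis that by simp
    show "continuous_on (- {0}) (dd [axis p 1, axis m 1] \<Phi>)" for p
      using sm_cont[OF sm, of "[axis p 1, axis m 1]"] ax_Basis by simp
  qed (use d\<sigma> cnz[unfolded c_def] in auto)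
  define g' where "g' t = a * (S1 t / S t) + (\<Sum>p\<in>P. dd [axis p 1] \<Phi> (c t) * \<sigma>1 p t)" for t
  define g'' where "g'' t = a * (S2 t / S t - (S1 t)\<^sup>2 / (S t)\<^sup>2)
       + (\<Sum>p\<in>P. (\<Sum>l\<in>P. dd [axis l 1, axis p 1] \<Phi> (c t) * \<sigma>1 l t) * \<sigma>1 p t + \<sigma>2 p t * dd [axis p 1] \<Phi> (c t))" for t
  have L1: "DERIV (\<lambda>t. ln (S t)) t :> S1 t / S t" for t
    unfolding S_def S1_def by (rule lse_derivs(1))
  have L2: "DERIV (\<lambda>t. S1 t / S t) t :> S2 t / S t - (S1 t)\<^sup>2 / (S t)\<^sup>2" for t
    unfolding S_def S1_def S2_def by (rule lse_derivs(2))
  have dg: "DERIV (\<lambda>t. a * ln (S t) + \<Phi> (c t)) t :> g' t" for t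
    unfolding g'_def
    by (intro DERIV_add DERIV_cmult dPhi L1)
  have dg': "DERIV g' t :> g'' t" for t
    unfolding g'_def g''_def
    by (intro DERIV_add DERIV_cmult DERIV_sum DERIV_mult dD d\<sigma>1 L2)
  have g''_nonneg: "g'' t \<ge> 0" for t
  proof -
    define z where "z = c t"
    define Q where "Q = Qf j z"
    define H where "H l m = of_real a * dz l (dzbar m (fs_pot j)) z + dz l (dzbar m (\<lambda>w. complex_of_real (\<Phi> w))) z" for l m
    define s where "s p = \<sigma>1 p t" for p
    have pd: "pos_def_herm H (- {j})"
      using adm cj[of t] unfolding admissible_def H_def z_def by blast
    have zj: "z $ j = 1" using cj z_def by simp
    have Qv: "Q = S t"
    proof -
      have sq: "(\<sigma> p t)\<^sup>2 = exp (x p + t * v p)" for p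
        by (simp add: \<sigma>_def power2_eq_square exp_add[symmetric])
      have "Q = 1 + (\<Sum>p\<in>-{j}. (\<sigma> p t)\<^sup>2)"
        unfolding Q_def Qf_def z_def using cp \<sigma>pos by (simp add: less_imp_le)
      also have "\<dots> = 1 + (\<Sum>p\<in>-{j}. exp (x p + t * v p))" by (simp only: sq)
      also have "1 + (\<Sum>p\<in>-{j}. exp (x p + t * v p)) = S t"
        unfolding S_def using xj vj by (simp add: sum.remove[of UNIV j] Compl_eq_Diff_UNIV)
      finally show ?thesis .
    qed
    have Qpos: "Q > 0" unfolding Q_def by (rule Qf_pos)
    have ReHv: "Re (H l m) = a * ((if l = m then 1 / Q else 0) - \<sigma> l t * \<sigma> m t / Q\<^sup>2)
        + (dd [axis l 1, axis m 1] \<Phi> z + (if l = m then dd [axis l 1] \<Phi> z / \<sigma> l t else 0)) / 4"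
      if "l \<in> P" "m \<in> P" for l m
    proof -
      have l: "l \<noteq> j" and m: "m \<noteq> j" using that P_def by auto
      have zl: "z $ l = complex_of_real (\<sigma> l t)" and zm: "z $ m = complex_of_real (\<sigma> m t)"
        using cp l m z_def by auto
      have A: "Re (dz l (dzbar m (fs_pot j)) z) = (if l = m then 1 / Q else 0) - \<sigma> l t * \<sigma> m t / Q\<^sup>2"
        using ReH_fs[OF zj l m] zl zm Qpos unfolding Q_def[symmetric]
        by (cases "l = m") (simp_all add: field_simps power2_eq_square)
      have yy: "dd [axis l \<i>, axis m \<i>] \<Phi> z = (if l = m then dd [axis l 1] \<Phi> z / \<sigma> l t else 0)"
      proof (cases "l = m")
        case True then show ?thesis using dyy_diag[OF sm rot zj l zl \<sigma>pos] by simp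
      next
        case False then show ?thesis using dyy_zero[OF sm rot zj m l False zm \<sigma>pos] by simp
      qed
      have B: "Re (dz l (dzbar m (\<lambda>w. complex_of_real (\<Phi> w))) z) = (dd [axis l 1, axis m 1] \<Phi> z + (if l = m then dd [axis l 1] \<Phi> z / \<sigma> l t else 0)) / 4"
        using ReH_Phi[OF sm zj l m] yy by simp
      show ?thesis unfolding H_def using A B by simp
    qed
    have QI: "4 * Re (\<Sum>l\<in>P. \<Sum>m\<in>P. H l m * complex_of_real (s l) * cnj (complex_of_real (s m))) =
       4 * a * ((\<Sum>l\<in>P. (s l)\<^sup>2) / Q - (\<Sum>l\<in>P. \<sigma> l t * s l)\<^sup>2 / Q\<^sup>2)
       + (\<Sum>l\<in>P. \<Sum>m\<in>P. dd [axis l 1, axis m 1] \<Phi> z * s l * s m) + (\<Sum>l\<in>P. dd [axis l 1] \<Phi> z / \<sigma> l t * (s l)\<^sup>2)"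
      by (rule quad_identity[OF finP ReHv])
    have e1: "(\<Sum>l\<in>P. (s l)\<^sup>2) = S2 t / 4"
    proof -
      have "(\<Sum>l\<in>P. (s l)\<^sup>2) = (\<Sum>l\<in>P. (v l)\<^sup>2 * exp (x l + t * v l) / 4)"
        by (intro sum.cong refl) (simp add: s_def \<sigma>1_def \<sigma>_def power2_eq_square exp_add[symmetric] field_simps)
      also have "\<dots> = (\<Sum>l\<in>UNIV. (v l)\<^sup>2 * exp (x l + t * v l) / 4)"
        unfolding P_def using vj by (simp add: sum.remove[of UNIV j] Compl_eq_Diff_UNIV)
      finally show ?thesis by (simp add: S2_def sum_divide_distrib)
    qed
    have e2: "(\<Sum>l\<in>P. \<sigma> l t * s l) = S1 t / 2"
    proof -
      have "(\<Sum>l\<in>P. \<sigma> l t * s l) = (\<Sum>l\<in>P. v l * exp (x l + t * v l) / 2)"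
        by (intro sum.cong refl) (simp add: s_def \<sigma>1_def \<sigma>_def power2_eq_square exp_add[symmetric] field_simps)
      also have "\<dots> = (\<Sum>l\<in>UNIV. v l * exp (x l + t * v l) / 2)"
        unfolding P_def using vj by (simp add: sum.remove[of UNIV j] Compl_eq_Diff_UNIV)
      finally show ?thesis by (simp add: S1_def sum_divide_distrib)
    qed
    have e3: "(\<Sum>l\<in>P. dd [axis l 1] \<Phi> z / \<sigma> l t * (s l)\<^sup>2) = (\<Sum>p\<in>P. \<sigma>2 p t * dd [axis p 1] \<Phi> z)"
      by (intro sum.cong refl) (use \<sigma>pos in \<open>simp add: s_def \<sigma>1_def \<sigma>2_def power2_eq_square field_simps\<close>)
    have e4: "(\<Sum>l\<in>P. \<Sum>m\<in>P. dd [axis l 1, axis m 1] \<Phi> z * s l * s m) = (\<Sum>p\<in>P. (\<Sum>l\<in>P. dd [axis l 1, axis p 1] \<Phi> z * \<sigma>1 l t) * \<sigma>1 p t)"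
      unfolding s_def by (subst sum.swap) (simp add: sum_distrib_right mult.assoc)
    have g''v: "g'' t = 4 * Re (\<Sum>l\<in>P. \<Sum>m\<in>P. H l m * complex_of_real (s l) * cnj (complex_of_real (s m)))"
    proof -
      have k: "4 * a * (S2 t / 4 / S t - (S1 t / 2)\<^sup>2 / (S t)\<^sup>2) = a * (S2 t / S t - (S1 t)\<^sup>2 / (S t)\<^sup>2)"
        by (simp add: power_divide algebra_simps)
      show ?thesis unfolding g''_def z_def[symmetric] QI e1 e2 e3 e4 Qv sum.distrib k by simp
    qed
    have "Re (\<Sum>l\<in>P. \<Sum>m\<in>P. H l m * complex_of_real (s l) * cnj (complex_of_real (s m))) \<ge> 0"
    proof (cases "\<exists>p\<in>P. s p \<noteq> 0")
      case True
      define \<xi> where "\<xi> p = (if p = j then 0 else complex_of_real (s p))" for p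
      have all: "\<forall>\<xi>::'d \<Rightarrow> complex. (\<forall>p. p \<notin> -{j} \<longrightarrow> \<xi> p = 0) \<and> (\<exists>p\<in>-{j}. \<xi> p \<noteq> 0) \<longrightarrow>
          0 < Re (\<Sum>l\<in>-{j}. \<Sum>m\<in>-{j}. H l m * \<xi> l * cnj (\<xi> m))"
        using pd unfolding pos_def_herm_def by blast
      have h1: "\<forall>p. p \<notin> -{j} \<longrightarrow> \<xi> p = 0" by (simp add: \<xi>_def)
      from True obtain p0 where "p0 \<in> P" "s p0 \<noteq> 0" by blast
      then have h2: "\<exists>p\<in>-{j}. \<xi> p \<noteq> 0" unfolding P_def \<xi>_def by (intro bexI[of _ p0]) auto
      have "0 < Re (\<Sum>l\<in>-{j}. \<Sum>m\<in>-{j}. H l m * \<xi> l * cnj (\<xi> m))"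
        using all h1 h2 by blast
      moreover have "(\<Sum>l\<in>-{j}. \<Sum>m\<in>-{j}. H l m * \<xi> l * cnj (\<xi> m)) = (\<Sum>l\<in>P. \<Sum>m\<in>P. H l m * complex_of_real (s l) * cnj (complex_of_real (s m)))"
        unfolding P_def \<xi>_def by (intro sum.cong refl) auto
      ultimately show ?thesis by simp
    next
      case False
      then show ?thesis by simp
    qed
    then show ?thesis using g''v by simp
  qed
  have "convex_on UNIV (\<lambda>t. a * ln (S t) + \<Phi> (c t))"
    by (rule f''_ge0_imp_convex[OF convex_UNIV dg dg' g''_nonneg])
  then show ?thesis unfolding S_def c_def \<sigma>_def by simp
qed




definition Ev :: "('d::finite \<Rightarrow> real) \<Rightarrow> complex^'d" where
  "Ev x = (\<chi> p. complex_of_real (exp (x p / 2)))"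

definition UU :: "real \<Rightarrow> (complex^'d::finite \<Rightarrow> real) \<Rightarrow> ('d \<Rightarrow> real) \<Rightarrow> real" where
  "UU a \<Phi> x = a * ln (\<Sum>p\<in>UNIV. exp (x p)) + \<Phi> (Ev x)"

lemma Ev_nz: "Ev x \<noteq> 0"
proof
  assume "Ev x = 0"
  then have "Ev x $ undefined = 0" by simp
  then show False by (simp add: Ev_def)
qed

lemma UU_hom:
  assumes pf: "proj_fun \<Phi>"
  shows "UU a \<Phi> (\<lambda>p. x p + s) = UU a \<Phi> x + a * s"
proof -
  have "Ev (\<lambda>p. x p + s) = complex_of_real (exp (s / 2)) *s Ev x"
    by (simp add: vec_eq_iff Ev_def add_divide_distrib exp_add mult.commute)
  moreover have "complex_of_real (exp (s / 2)) \<noteq> 0" by simp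
  ultimately have "\<Phi> (Ev (\<lambda>p. x p + s)) = \<Phi> (Ev x)"
    using pf[unfolded proj_fun_def, rule_format, OF Ev_nz] by simp
  moreover have "(\<Sum>p\<in>UNIV. exp (x p + s)) = exp s * (\<Sum>p\<in>UNIV. exp (x p))"
    by (simp add: exp_add sum_distrib_left mult.commute)
  moreover have "(\<Sum>p\<in>UNIV. exp (x p)) > 0" by (intro sum_pos) auto
  ultimately show ?thesis unfolding UU_def by (simp add: ln_mult algebra_simps)
qed

lemma curve_Ev:
  assumes "x j = 0" "v j = 0"
  shows "curve (-{j}) (axis j 1) (\<lambda>p t. exp ((x p + t * v p) / 2)) t = Ev (\<lambda>p. x p + t * v p)"
  using assms by (auto simp: vec_eq_iff curve_def Ev_def axis_def)

lemma UU_convex_line: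
  fixes \<Phi> :: "complex^'d::finite \<Rightarrow> real"
  assumes sm: "smooth_on (- {0}) \<Phi>"
    and rot: "\<forall>p \<theta> z. \<Phi> (\<chi> q. if q = p then cis \<theta> * z $ q else z $ q) = \<Phi> z"
    and adm: "admissible a \<Phi>" and pf: "proj_fun \<Phi>"
  shows "convex_on UNIV (\<lambda>t. UU a \<Phi> (\<lambda>p. x p + t * v p))"
proof -
  define j :: 'd where "j = undefined"
  define x' where "x' p = x p - x j" for p
  define v' where "v' p = v p - v j" for p
  have eq: "UU a \<Phi> (\<lambda>p. x p + t * v p) = UU a \<Phi> (\<lambda>p. x' p + t * v' p) + a * (x j + t * v j)" for t
  proof -
    have "(\<lambda>p. x p + t * v p) = (\<lambda>p. (x' p + t * v' p) + (x j + t * v j))"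
      by (auto simp: x'_def v'_def algebra_simps)
    then show ?thesis using UU_hom[OF pf] by metis
  qed
  have c1: "convex_on UNIV (\<lambda>t. UU a \<Phi> (\<lambda>p. x' p + t * v' p))"
    using chart_convex[OF sm rot adm, of x' j v'] curve_Ev[of x' j v']
    by (simp add: x'_def v'_def UU_def)
  have c2: "convex_on UNIV (\<lambda>t. a * (x j + t * v j))"
    by (rule convex_onI) (auto simp: algebra_simps)
  have "convex_on UNIV (\<lambda>t. UU a \<Phi> (\<lambda>p. x' p + t * v' p) + a * (x j + t * v j))"
    using c1 c2 by (rule convex_on_add)
  then show ?thesis unfolding eq .
qed

lemma UU_convex:
  fixes \<Phi> :: "complex^'d::finite \<Rightarrow> real"
  assumes sm: "smooth_on (- {0}) \<Phi>"
    and rot: "\<forall>p \<theta> z. \<Phi> (\<chi> q. if q = p then cis \<theta> * z $ q else z $ q) = \<Phi> z"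
    and adm: "admissible a \<Phi>" and pf: "proj_fun \<Phi>"
    and l: "0 \<le> l" "l \<le> 1"
  shows "UU a \<Phi> (\<lambda>p. (1 - l) * x p + l * y p) \<le> (1 - l) * UU a \<Phi> x + l * UU a \<Phi> y"
proof -
  have "convex_on UNIV (\<lambda>t. UU a \<Phi> (\<lambda>p. x p + t * (y p - x p)))"
    by (rule UU_convex_line[OF sm rot adm pf])
  from convex_onD[OF this l, of 0 1]
  show ?thesis by (simp add: algebra_simps)
qed




lemma swp_swp: "swp i j (swp i j k) = k"
  by (auto simp: swp_def)

lemma sum_swp: "(\<Sum>k\<in>UNIV. f (swp i j k)) = (\<Sum>k\<in>UNIV. (f k :: real))"
  by (rule sum.reindex_bij_witness[of _ "swp i j" "swp i j"]) (auto simp: swp_swp)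

lemma avg_lemma:
  fixes V :: "('i::finite \<Rightarrow> real) \<Rightarrow> real"
  assumes cvx: "\<And>x y l. 0 \<le> l \<Longrightarrow> l \<le> 1 \<Longrightarrow> V (\<lambda>k. (1 - l) * x k + l * y k) \<le> (1 - l) * V x + l * V y"
    and sw: "\<And>x i j. V (\<lambda>k. x (swp i j k)) = V x"
  shows "V (\<lambda>k. (\<Sum>q\<in>UNIV. x q) / real CARD('i)) \<le> V x"
proof -
  define \<mu> where "\<mu> = (\<Sum>q\<in>UNIV. x q) / real CARD('i)"
  have N: "real CARD('i) > 0" by simp
  have main: "\<And>x :: 'i \<Rightarrow> real. card {k. x k \<noteq> \<mu>} = n \<Longrightarrow> (\<Sum>q\<in>UNIV. x q) = real CARD('i) * \<mu> \<Longrightarrow> V (\<lambda>k. \<mu>) \<le> V x" for n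
  proof (induction n rule: less_induct)
    case (less n)
    fix x :: "'i \<Rightarrow> real" assume cn: "card {k. x k \<noteq> \<mu>} = n" and sx: "(\<Sum>q\<in>UNIV. x q) = real CARD('i) * \<mu>"
    show "V (\<lambda>k. \<mu>) \<le> V x"
    proof (cases "\<forall>k. x k = \<mu>")
      case True
      then have "x = (\<lambda>k. \<mu>)" by auto
      then show ?thesis by simp
    next
      case False
      have sum0: "(\<Sum>q\<in>UNIV. x q - \<mu>) = 0" using sx by (simp add: sum_subtractf)
      have "\<exists>i. x i > \<mu>"
      proof (rule ccontr)
        assume "\<not> (\<exists>i. x i > \<mu>)"
        then have le: "\<forall>q. \<mu> - x q \<ge> 0" by (auto simp: not_less)
        have "(\<Sum>q\<in>UNIV. \<mu> - x q) = 0" using sum0 by (simp add: sum_subtractf)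
        then have "\<forall>q\<in>UNIV. \<mu> - x q = 0" using le by (subst (asm) sum_nonneg_eq_0_iff) auto
        then show False using False by auto
      qed
      then obtain i where i: "x i > \<mu>" by blast
      have "\<exists>j. x j < \<mu>"
      proof (rule ccontr)
        assume "\<not> (\<exists>j. x j < \<mu>)"
        then have le: "\<forall>q. x q - \<mu> \<ge> 0" by (auto simp: not_less)
        then have "\<forall>q\<in>UNIV. x q - \<mu> = 0" using sum0 by (subst (asm) sum_nonneg_eq_0_iff) auto
        then show False using False by auto
      qed
      then obtain j where j: "x j < \<mu>" by blast
      have ij: "i \<noteq> j" using i j by auto
      define l where "l = (x i - \<mu>) / (x i - x j)"
      have l0: "0 \<le> l" "l \<le> 1" using i j by (auto simp: l_def field_simps)
      define y where "y k = (1 - l) * x k + l * x (swp i j k)" for k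
      have d: "x i - x j > 0" using i j by simp
      have yi: "y i = \<mu>"
      proof -
        have "y i = x i - l * (x i - x j)" by (simp add: y_def swp_def algebra_simps)
        also have "l * (x i - x j) = x i - \<mu>" using d by (simp add: l_def)
        finally show ?thesis by simp
      qed
      have yk: "y k = x k" if "k \<noteq> i" "k \<noteq> j" for k using that by (simp add: y_def swp_def algebra_simps)
      have sy: "(\<Sum>q\<in>UNIV. y q) = real CARD('i) * \<mu>"
      proof -
        have "(\<Sum>q\<in>UNIV. y q) = (1 - l) * (\<Sum>q\<in>UNIV. x q) + l * (\<Sum>q\<in>UNIV. x (swp i j q))"
          unfolding y_def by (simp add: sum.distrib sum_distrib_left)
        also have "(\<Sum>q\<in>UNIV. x (swp i j q)) = (\<Sum>q\<in>UNIV. x q)" by (rule sum_swp)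
        finally show ?thesis using sx by (simp add: algebra_simps)
      qed
      have sub: "{k. y k \<noteq> \<mu>} \<subseteq> {k. x k \<noteq> \<mu>} - {i}"
      proof
        fix k assume "k \<in> {k. y k \<noteq> \<mu>}"
        then have yk': "y k \<noteq> \<mu>" by simp
        then have "k \<noteq> i" using yi by auto
        moreover have "x k \<noteq> \<mu>"
        proof (cases "k = j")
          case True then show ?thesis using j by simp
        next
          case False then show ?thesis using yk[OF \<open>k \<noteq> i\<close> False] yk' by simp
        qed
        ultimately show "k \<in> {k. x k \<noteq> \<mu>} - {i}" by simp
      qed
      have "card {k. y k \<noteq> \<mu>} < n"
      proof -
        have "card {k. y k \<noteq> \<mu>} \<le> card ({k. x k \<noteq> \<mu>} - {i})" by (rule card_mono) (use sub in auto)
        also have "\<dots> < card {k. x k \<noteq> \<mu>}" using i by (intro card_Diff1_less) auto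
        finally show ?thesis using cn by simp
      qed
      then have "V (\<lambda>k. \<mu>) \<le> V y" using less.IH sy by blast
      also have "V y \<le> (1 - l) * V x + l * V (\<lambda>k. x (swp i j k))"
        unfolding y_def by (rule cvx[OF l0])
      also have "\<dots> = V x" by (simp add: sw algebra_simps)
      finally show ?thesis .
    qed
  qed
  show ?thesis unfolding \<mu>_def[symmetric] by (rule main[OF refl]) (simp add: \<mu>_def)
qed




lemma UU_perm:
  assumes "bij \<pi>" "\<Phi> (Ev (\<lambda>q. X (\<pi> q))) = \<Phi> (Ev X)"
  shows "UU a \<Phi> (\<lambda>q. X (\<pi> q)) = UU a \<Phi> X"
proof -
  have "(\<Sum>q\<in>UNIV. exp (X (\<pi> q))) = (\<Sum>q\<in>UNIV. exp (X q))"
    using assms(1) by (rule sum.reindex_bij_betw)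
  then show ?thesis using assms(2) by (simp add: UU_def)
qed

definition subb :: "'b \<Rightarrow> ('c \<Rightarrow> real) \<Rightarrow> ('b \<times> 'c \<Rightarrow> real) \<Rightarrow> ('b \<times> 'c \<Rightarrow> real)" where
  "subb h y X = (\<lambda>q. if fst q = h then y (snd q) else X q)"

locale setting =
  fixes a :: real and \<Phi> :: "complex^('b::finite \<times> 'c::finite) \<Rightarrow> real"
  assumes sm: "smooth_on (- {0}) \<Phi>"
    and adm: "admissible a \<Phi>" and pf: "proj_fun \<Phi>" and gi: "G_invariant \<Phi>"
begin

lemma rot: "\<forall>p \<theta> z. \<Phi> (\<chi> q. if q = p then cis \<theta> * z $ q else z $ q) = \<Phi> z"
  using gi unfolding G_invariant_def by blast

lemma cvx: "0 \<le> l \<Longrightarrow> l \<le> 1 \<Longrightarrow> UU a \<Phi> (\<lambda>p. (1 - l) * x p + l * y p) \<le> (1 - l) * UU a \<Phi> x + l * UU a \<Phi> y"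
  by (rule UU_convex[OF sm rot adm pf])

lemma block_step:
  "UU a \<Phi> (subb h (\<lambda>_. (\<Sum>c\<in>UNIV. X (h, c)) / real CARD('c)) X) \<le> UU a \<Phi> X"
proof -
  define V where "V y = UU a \<Phi> (subb h y X)" for y
  have "V (\<lambda>k. (\<Sum>q\<in>UNIV. X (h, q)) / real CARD('c)) \<le> V (\<lambda>c. X (h, c))"
  proof (rule avg_lemma)
    fix y1 y2 :: "'c \<Rightarrow> real" and l :: real assume l: "0 \<le> l" "l \<le> 1"
    have "subb h (\<lambda>k. (1 - l) * y1 k + l * y2 k) X = (\<lambda>q. (1 - l) * subb h y1 X q + l * subb h y2 X q)"
      by (auto simp: subb_def algebra_simps)
    then show "V (\<lambda>k. (1 - l) * y1 k + l * y2 k) \<le> (1 - l) * V y1 + l * V y2"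
      unfolding V_def using cvx[OF l] by simp
  next
    fix y :: "'c \<Rightarrow> real" and i j
    define \<pi> where "\<pi> q = (if fst q = h then (h, swp i j (snd q)) else q)" for q :: "'b \<times> 'c"
    have pp: "\<pi> (\<pi> q) = q" for q by (auto simp: \<pi>_def swp_swp)
    have bij: "bij \<pi>" by (rule o_bij[of \<pi>]) (auto simp: pp)
    have e: "subb h (\<lambda>k. y (swp i j k)) X = (\<lambda>q. subb h y X (\<pi> q))"
      by (auto simp: subb_def \<pi>_def)
    have "\<Phi> (Ev (\<lambda>q. subb h y X (\<pi> q))) = \<Phi> (Ev (subb h y X))"
    proof -
      have "(\<chi> q. if fst q = h then Ev (subb h y X) $ (h, swp i j (snd q)) else Ev (subb h y X) $ q) = Ev (\<lambda>q. subb h y X (\<pi> q))"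
        by (auto simp: vec_eq_iff Ev_def \<pi>_def)
      moreover have "\<Phi> (\<chi> q. if fst q = h then Ev (subb h y X) $ (h, swp i j (snd q)) else Ev (subb h y X) $ q) = \<Phi> (Ev (subb h y X))"
        using gi unfolding G_invariant_def by blast
      ultimately show ?thesis by simp
    qed
    then show "V (\<lambda>k. y (swp i j k)) = V y" unfolding V_def e by (rule UU_perm[OF bij])
  qed
  moreover have "subb h (\<lambda>c. X (h, c)) X = X" by (auto simp: subb_def)
  ultimately show ?thesis by (simp add: V_def)
qed

definition bmean :: "('b \<times> 'c \<Rightarrow> real) \<Rightarrow> 'b \<Rightarrow> real" where
  "bmean x h = (\<Sum>c\<in>UNIV. x (h, c)) / real CARD('c)"

lemma stage1: "UU a \<Phi> (\<lambda>q. bmean x (fst q)) \<le> UU a \<Phi> x"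
proof -
  define XB where "XB B = (\<lambda>q. if fst q \<in> B then bmean x (fst q) else x q)" for B
  have "finite B \<Longrightarrow> UU a \<Phi> (XB B) \<le> UU a \<Phi> x" for B
  proof (induction B rule: finite_induct)
    case empty
    then show ?case by (simp add: XB_def)
  next
    case (insert h B)
    have e1: "XB (insert h B) = subb h (\<lambda>_. (\<Sum>c\<in>UNIV. XB B (h, c)) / real CARD('c)) (XB B)"
      using insert(2) by (auto simp: XB_def subb_def bmean_def)
    have "UU a \<Phi> (XB (insert h B)) \<le> UU a \<Phi> (XB B)" unfolding e1 by (rule block_step)
    then show ?case using insert(3) by simp
  qed
  from this[of UNIV] show ?thesis by (simp add: XB_def)
qed

lemma stage2: "UU a \<Phi> (\<lambda>q. (\<Sum>p\<in>UNIV. x p) / real CARD('b \<times> 'c)) \<le> UU a \<Phi> x"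
proof -
  define W where "W y = UU a \<Phi> (\<lambda>q. y (fst q))" for y :: "'b \<Rightarrow> real"
  have "W (\<lambda>k. (\<Sum>h\<in>UNIV. bmean x h) / real CARD('b)) \<le> W (bmean x)"
  proof (rule avg_lemma)
    fix y1 y2 :: "'b \<Rightarrow> real" and l :: real assume l: "0 \<le> l" "l \<le> 1"
    show "W (\<lambda>k. (1 - l) * y1 k + l * y2 k) \<le> (1 - l) * W y1 + l * W y2"
      unfolding W_def using cvx[OF l] by simp
  next
    fix y :: "'b \<Rightarrow> real" and i j
    define \<pi> where "\<pi> q = (swp i j (fst q), snd q)" for q :: "'b \<times> 'c"
    have pp: "\<pi> (\<pi> q) = q" for q by (auto simp: \<pi>_def swp_swp)
    have bij: "bij \<pi>" by (rule o_bij[of \<pi>]) (auto simp: pp)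
    have "\<Phi> (Ev (\<lambda>q. y (fst (\<pi> q)))) = \<Phi> (Ev (\<lambda>q. y (fst q)))"
    proof -
      have "(\<chi> q. Ev (\<lambda>q. y (fst q)) $ (swp i j (fst q), snd q)) = Ev (\<lambda>q. y (fst (\<pi> q)))"
        by (auto simp: vec_eq_iff Ev_def \<pi>_def)
      moreover have "\<Phi> (\<chi> q. Ev (\<lambda>q. y (fst q)) $ (swp i j (fst q), snd q)) = \<Phi> (Ev (\<lambda>q. y (fst q)))"
        using gi unfolding G_invariant_def by blast
      ultimately show ?thesis by simp
    qed
    from UU_perm[OF bij this] show "W (\<lambda>k. y (swp i j k)) = W y"
      unfolding W_def by (simp add: \<pi>_def)
  qed
  moreover have "(\<Sum>h\<in>UNIV. bmean x h) / real CARD('b) = (\<Sum>p\<in>UNIV. x p) / real CARD('b \<times> 'c)"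
  proof -
    have "(\<Sum>p\<in>UNIV. x p) = (\<Sum>h\<in>UNIV. \<Sum>c\<in>UNIV. x (h, c))"
      by (simp add: sum.cartesian_product UNIV_Times_UNIV[symmetric] del: UNIV_Times_UNIV)
    moreover have "CARD('b \<times> 'c) = CARD('b) * CARD('c)" by (simp add: card_cartesian_product UNIV_Times_UNIV[symmetric] del: UNIV_Times_UNIV)
    ultimately show ?thesis by (simp add: bmean_def sum_divide_distrib[symmetric] field_simps)
  qed
  ultimately have "UU a \<Phi> (\<lambda>q. (\<Sum>p\<in>UNIV. x p) / real CARD('b \<times> 'c)) \<le> UU a \<Phi> (\<lambda>q. bmean x (fst q))"
    by (simp add: W_def)
  also have "\<dots> \<le> UU a \<Phi> x" by (rule stage1)
  finally show ?thesis .
qed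

end




lemma convex_bdd_mono:
  fixes f :: "real \<Rightarrow> real"
  assumes cv: "convex_on UNIV f" and bd: "\<And>t. t \<le> 0 \<Longrightarrow> f t \<le> B" and st: "s \<le> t"
  shows "f s \<le> f t"
proof (rule ccontr)
  assume "\<not> f s \<le> f t"
  then have D: "f s - f t > 0" by simp
  define D where "D = f s - f t"
  have Dp: "D > 0" using D D_def by simp
  have slt: "s < t" using st D by (cases "s = t") auto
  define K where "K = \<bar>B - f t\<bar> + 1"
  have Kp: "K > 0" by (simp add: K_def)
  define r where "r = min 0 s - K * (t - s) / D - 1"
  have KD: "K * (t - s) / D > 0" using Kp Dp slt by simp
  have rs: "r < s" and r0: "r \<le> 0" using KD by (auto simp: r_def)
  have tr: "t - r \<ge> (t - s) + K * (t - s) / D + 1" by (auto simp: r_def)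
  have trp: "t - r > 0" using rs slt by simp
  define l where "l = (s - r) / (t - r)"
  have l0: "0 \<le> l" "l \<le> 1" using rs slt trp by (auto simp: l_def field_simps)
  have lt: "l * (t - r) = s - r" using trp by (simp add: l_def)
  have comb: "(1 - l) *\<^sub>R r + l *\<^sub>R t = s"
  proof -
    have "(1 - l) *\<^sub>R r + l *\<^sub>R t = r + l * (t - r)" by (simp add: algebra_simps)
    then show ?thesis using lt by simp
  qed
  have "f s \<le> (1 - l) * f r + l * f t" using convex_onD[OF cv l0, of r t] comb by simp
  also have "\<dots> \<le> (1 - l) * B + l * f t" using bd[OF r0] l0 by (simp add: mult_left_mono)
  finally have "D \<le> (1 - l) * (B - f t)" by (simp add: D_def algebra_simps)
  also have "\<dots> \<le> (1 - l) * \<bar>B - f t\<bar>" using l0 by (intro mult_left_mono) auto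
  also have "1 - l = (t - s) / (t - r)" using trp by (simp add: l_def field_simps)
  finally have "D * (t - r) \<le> (t - s) * \<bar>B - f t\<bar>" using trp by (simp add: field_simps)
  moreover have "D * (t - r) \<ge> D * ((t - s) + K * (t - s) / D + 1)" using tr Dp by (intro mult_left_mono) auto
  moreover have "D * ((t - s) + K * (t - s) / D + 1) = D * (t - s) + K * (t - s) + D" using Dp by (simp add: field_simps)
  moreover have "K * (t - s) > (t - s) * \<bar>B - f t\<bar>" using slt by (simp add: K_def algebra_simps)
  ultimately show False using Dp slt by (smt (verit) mult_pos_pos)
qed




context setting
begin

lemma Phi_cont: "continuous_on (- {0}) \<Phi>"
  using sm_cont[OF sm, of "[]"] by simp

lemma Phi_norm: "z \<noteq> 0 \<Longrightarrow> \<Phi> z = \<Phi> ((1 / norm z) *\<^sub>R z)"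
proof -
  assume z: "z \<noteq> 0"
  have "(1 / norm z) *\<^sub>R z = complex_of_real (1 / norm z) *s z"
    unfolding vec_eq_iff by (simp add: scaleR_conv_of_real[where 'a = complex])
  moreover have "complex_of_real (1 / norm z) \<noteq> 0" using z by simp
  ultimately show ?thesis using pf z unfolding proj_fun_def by metis
qed

lemma Phi_bdd: "bdd_above (\<Phi> ` (- {0}))"
proof -
  have sub: "sphere (0::complex^('b \<times> 'c)) 1 \<subseteq> - {0}" by auto
  have "compact (\<Phi> ` sphere 0 1)"
    by (rule compact_continuous_image[OF continuous_on_subset[OF Phi_cont sub] compact_sphere])
  then have "bdd_above (\<Phi> ` sphere 0 1)" by (intro bounded_imp_bdd_above compact_imp_bounded)
  then obtain B where B0: "\<forall>w\<in>sphere 0 1. \<Phi> w \<le> B" unfolding bdd_above_def by auto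
  then have B: "\<And>w. w \<in> sphere 0 1 \<Longrightarrow> \<Phi> w \<le> B" by blast
  have "\<Phi> z \<le> B" if "z \<in> - {0}" for z
  proof -
    have z: "z \<noteq> 0" using that by auto
    have "(1 / norm z) *\<^sub>R z \<in> sphere 0 1" using z by simp
    then show ?thesis using B Phi_norm[OF z] by simp
  qed
  then show ?thesis by (intro bdd_aboveI2) auto
qed

lemma torus_Q: "finite Q \<Longrightarrow> \<Phi> (\<chi> p. if p \<in> Q then complex_of_real (cmod (z $ p)) else z $ p) = \<Phi> z"
proof (induction Q rule: finite_induct)
  case empty then show ?case by simp
next
  case (insert q Q)
  define w where "w = (\<chi> p. if p \<in> Q then complex_of_real (cmod (z $ p)) else z $ p)"
  have "\<Phi> (\<chi> r. if r = q then cis (- Arg (z $ q)) * w $ r else w $ r) = \<Phi> w"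
    using rot by blast
  moreover have "(\<chi> r. if r = q then cis (- Arg (z $ q)) * w $ r else w $ r) =
      (\<chi> p. if p \<in> insert q Q then complex_of_real (cmod (z $ p)) else z $ p)"
    using insert(2) by (auto simp: vec_eq_iff w_def cis_Arg_mult)
  ultimately show ?case using insert(3) w_def by simp
qed

lemma torus: "\<Phi> (\<chi> p. complex_of_real (cmod (z $ p))) = \<Phi> z"
  using torus_Q[of UNIV z] by simp

end

locale setting2 = setting a \<Phi> for a and \<Phi> :: "complex^('b::finite \<times> 'c::finite) \<Rightarrow> real" +
  assumes apos: "0 < a" and sup0: "(SUP z\<in>- {0}. \<Phi> z) = 0"
begin

lemma Phi_le0: "z \<noteq> 0 \<Longrightarrow> \<Phi> z \<le> 0"
  using cSUP_upper[of z "- {0}" \<Phi>] Phi_bdd sup0 by auto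

lemma Phi_approx:
  assumes "\<epsilon> > 0" shows "\<exists>x. \<Phi> (Ev x) > - \<epsilon>"
proof -
  have "- \<epsilon> < (SUP z\<in>- {0}. \<Phi> z)" using sup0 assms by simp
  then obtain z where z: "z \<noteq> 0" "\<Phi> z > - \<epsilon>"
    using less_cSUP_iff[of "- {0}" \<Phi> "- \<epsilon>"] Phi_bdd by auto
  define w0 where "w0 = (\<chi> p. complex_of_real (cmod (z $ p)))"
  have w0: "\<Phi> w0 > - \<epsilon>" using torus[of z] z w0_def by simp
  have "w0 \<noteq> 0"
  proof
    assume "w0 = 0"
    then have "\<forall>p. z $ p = 0" by (auto simp: vec_eq_iff w0_def)
    then show False using z(1) by (auto simp: vec_eq_iff)
  qed
  then have "isCont \<Phi> w0" using Phi_cont continuous_on_eq_continuous_at[of "- {0}" \<Phi>] by auto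
  then obtain d where d: "d > 0" "\<And>w. dist w w0 < d \<Longrightarrow> dist (\<Phi> w) (\<Phi> w0) < \<Phi> w0 + \<epsilon>"
    using w0 unfolding continuous_at_eps_delta by (metis add.commute diff_gt_0_iff_gt diff_minus_eq_add)
  define onev where "onev = (\<chi> p. 1 + 0 * w0 $ p)"
  define M where "M = norm onev + 1"
  have Mp: "M > 0" by (simp add: M_def add_nonneg_pos)
  have nM: "norm onev \<le> M" by (simp add: M_def)
  define \<eta> where "\<eta> = d / (2 * M)"
  have \<eta>: "\<eta> > 0" using d Mp by (simp add: \<eta>_def)
  have "\<eta> * norm onev < d"
  proof -
    have "\<eta> * norm onev \<le> \<eta> * M" using \<eta> nM by (simp add: mult_left_mono)
    also have "\<dots> = d / 2" using Mp by (simp add: \<eta>_def)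
    finally show ?thesis using d by simp
  qed
  then have "dist (w0 + \<eta> *\<^sub>R onev) w0 < d" using \<eta> by (simp add: dist_norm)
  then have "\<bar>\<Phi> (w0 + \<eta> *\<^sub>R onev) - \<Phi> w0\<bar> < \<Phi> w0 + \<epsilon>" using d(2) by (simp add: dist_real_def)
  then have "\<Phi> (w0 + \<eta> *\<^sub>R onev) > - \<epsilon>" by linarith
  moreover have "w0 + \<eta> *\<^sub>R onev = Ev (\<lambda>p. 2 * ln (cmod (z $ p) + \<eta>))"
    unfolding vec_eq_iff using \<eta> by (simp add: w0_def onev_def Ev_def scaleR_conv_of_real[where 'a=complex] add_nonneg_pos)
  ultimately show ?thesis by metis
qed

end




context setting2
begin

lemma Phi_Ev_le0: "\<Phi> (Ev x) \<le> 0"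
  using Phi_le0[OF Ev_nz] .

lemma coord_mono:
  assumes "t \<le> t'"
  shows "UU a \<Phi> (\<lambda>q. x q + t * (if q = p then 1 else 0)) \<le> UU a \<Phi> (\<lambda>q. x q + t' * (if q = p then 1 else 0))"
proof -
  define f where "f t = UU a \<Phi> (\<lambda>q. x q + t * (if q = p then 1 else 0))" for t
  have cv: "convex_on UNIV f" unfolding f_def by (rule UU_convex_line[OF sm rot adm pf])
  have bd: "f t \<le> a * ln (\<Sum>q\<in>UNIV. exp (x q))" if "t \<le> 0" for t
  proof -
    have "(\<Sum>q\<in>UNIV. exp (x q + t * (if q = p then 1 else 0))) \<le> (\<Sum>q\<in>UNIV. exp (x q))"
      using that by (intro sum_mono) auto
    moreover have "(\<Sum>q\<in>UNIV. exp (x q + t * (if q = p then 1 else 0))) > 0" by (intro sum_pos) auto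
    ultimately have "ln (\<Sum>q\<in>UNIV. exp (x q + t * (if q = p then 1 else 0))) \<le> ln (\<Sum>q\<in>UNIV. exp (x q))"
      by simp
    then have "a * ln (\<Sum>q\<in>UNIV. exp (x q + t * (if q = p then 1 else 0))) \<le> a * ln (\<Sum>q\<in>UNIV. exp (x q))"
      using apos by (simp add: mult_left_mono)
    moreover have "\<Phi> (Ev (\<lambda>q. x q + t * (if q = p then 1 else 0))) \<le> 0" by (rule Phi_Ev_le0)
    ultimately show ?thesis unfolding f_def UU_def by linarith
  qed
  show ?thesis using convex_bdd_mono[OF cv bd assms] unfolding f_def .
qed

lemma mono_all:
  assumes "\<And>q. x q \<le> y q"
  shows "UU a \<Phi> x \<le> UU a \<Phi> y"
proof -
  have "finite Q \<Longrightarrow> \<forall>x. (\<forall>q. x q \<le> y q) \<longrightarrow> (\<forall>q. q \<notin> Q \<longrightarrow> x q = y q) \<longrightarrow> UU a \<Phi> x \<le> UU a \<Phi> y" for Q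
  proof (induction Q rule: finite_induct)
    case empty
    show ?case
    proof (intro allI impI)
      fix x :: "'b \<times> 'c \<Rightarrow> real" assume "\<forall>q. x q \<le> y q" "\<forall>q. q \<notin> {} \<longrightarrow> x q = y q"
      then have "\<And>q. x q = y q" by blast
      then have "x = y" by (rule ext)
      then show "UU a \<Phi> x \<le> UU a \<Phi> y" by simp
    qed
  next
    case (insert p Q)
    show ?case
    proof (intro allI impI)
      fix x assume le: "\<forall>q. x q \<le> y q" and eq: "\<forall>q. q \<notin> insert p Q \<longrightarrow> x q = y q"
      define x' where "x' = x(p := y p)"
      have "UU a \<Phi> (\<lambda>q. x q + 0 * (if q = p then 1 else 0)) \<le> UU a \<Phi> (\<lambda>q. x q + (y p - x p) * (if q = p then 1 else 0))"
      proof -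
        have "x p \<le> y p" using le by blast
        then show ?thesis by (intro coord_mono) simp
      qed
      moreover have "(\<lambda>q. x q + (y p - x p) * (if q = p then 1 else 0)) = x'" by (auto simp: x'_def)
      ultimately have "UU a \<Phi> x \<le> UU a \<Phi> x'" by simp
      also have "UU a \<Phi> x' \<le> UU a \<Phi> y"
        using insert.IH le eq by (auto simp: x'_def)
      finally show "UU a \<Phi> x \<le> UU a \<Phi> y" .
    qed
  qed
  from this[of UNIV] assms show ?thesis by simp
qed

lemma claim2: "\<Phi> (Ev x) \<le> UU a \<Phi> (\<lambda>_. 0)"
proof -
  define M where "M = Max (range x)"
  have xM: "x q \<le> M" for q unfolding M_def by (intro Max_ge) auto
  have "M \<in> range x" unfolding M_def by (intro Max_in) auto
  then obtain p0 where p0: "x p0 = M" by blast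
  have "UU a \<Phi> x \<le> UU a \<Phi> (\<lambda>q. 0 + M)" using xM by (intro mono_all) simp
  also have "\<dots> = UU a \<Phi> (\<lambda>_. 0) + a * M" by (rule UU_hom[OF pf])
  finally have U1: "UU a \<Phi> x \<le> UU a \<Phi> (\<lambda>_. 0) + a * M" .
  have "exp M \<le> (\<Sum>q\<in>UNIV. exp (x q))"
    using p0 member_le_sum[of p0 UNIV "\<lambda>q. exp (x q)"] by auto
  then have "M \<le> ln (\<Sum>q\<in>UNIV. exp (x q))" by (metis exp_gt_zero ln_exp ln_le_cancel_iff order_less_le_trans)
  then have "a * M \<le> a * ln (\<Sum>q\<in>UNIV. exp (x q))" using apos by (simp add: mult_left_mono)
  then show ?thesis using U1 unfolding UU_def by linarith
qed

lemma UU0: "UU a \<Phi> (\<lambda>_. 0) \<ge> 0"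
proof (rule ccontr)
  assume "\<not> UU a \<Phi> (\<lambda>_. 0) \<ge> 0"
  then have "- UU a \<Phi> (\<lambda>_. 0) > 0" by simp
  from Phi_approx[OF this] obtain x where "\<Phi> (Ev x) > - (- UU a \<Phi> (\<lambda>_. 0))" by blast
  then show False using claim2[of x] by simp
qed

lemma final:
  assumes nz: "\<forall>p. z $ p \<noteq> 0"
  shows "psi a z \<le> \<Phi> z"
proof -
  define x where "x p = 2 * ln (cmod (z $ p))" for p
  have cpos: "cmod (z $ p) > 0" for p
  proof -
    have "z $ p \<noteq> 0" using nz by blast
    then show ?thesis by simp
  qed
  have ex: "exp (x p / 2) = cmod (z $ p)" for p using cpos by (simp add: x_def)
  have Evx: "Ev x = (\<chi> p. complex_of_real (cmod (z $ p)))" by (simp add: Ev_def ex)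
  have Phiz: "\<Phi> z = \<Phi> (Ev x)" using torus[of z] Evx by simp
  define S where "S = (\<Sum>p\<in>UNIV. exp (x p))"
  have Spos: "S > 0" unfolding S_def by (intro sum_pos) auto
  define xb where "xb = (\<Sum>p\<in>UNIV. x p) / real CARD('b \<times> 'c)"
  have "UU a \<Phi> (\<lambda>q. 0 + xb) \<le> UU a \<Phi> x" unfolding xb_def using stage2 by simp
  then have "UU a \<Phi> (\<lambda>_. 0) + a * xb \<le> UU a \<Phi> x" using UU_hom[OF pf, where x="\<lambda>_. 0" and s=xb] by simp
  then have low: "a * xb - a * ln S \<le> \<Phi> (Ev x)" using UU0 unfolding UU_def S_def by linarith
  have psi_eq: "psi a z = a * xb - a * ln S"
  proof -
    have P: "(\<Prod>p\<in>UNIV. cmod (z $ p)) = exp ((\<Sum>p\<in>UNIV. x p) / 2)"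
      by (simp add: ex[symmetric] exp_sum sum_divide_distrib)
    have S2: "(\<Sum>p\<in>UNIV. (cmod (z $ p))\<^sup>2) = S"
      unfolding S_def by (intro sum.cong refl) (simp add: ex[symmetric] power2_eq_square exp_add[symmetric])
    have "psi a z = ln (exp ((\<Sum>p\<in>UNIV. x p) / 2) powr (2 * a / real CARD('b \<times> 'c)) / S powr a)"
      unfolding psi_def P S2 ..
    also have "\<dots> = ln (exp ((\<Sum>p\<in>UNIV. x p) / 2) powr (2 * a / real CARD('b \<times> 'c))) - ln (S powr a)"
      using Spos by (intro ln_divide_pos) auto
    also have "\<dots> = a * xb - a * ln S"
      using Spos by (simp add: xb_def field_simps)
    finally show ?thesis .
  qed
  show ?thesis using low psi_eq Phiz by simp
qed

end



theorem theorem1: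
  fixes a :: real
    and \<Phi> :: "complex^('b::finite \<times> 'c::finite) \<Rightarrow> real"
  assumes "0 < a"
    and "proj_fun \<Phi>"
    and "smooth_on (- {0}) \<Phi>"
    and "admissible a \<Phi>"
    and "G_invariant \<Phi>"
    and "(SUP z\<in>- {0}. \<Phi> z) = 0"
  shows "\<forall>z. (\<forall>p. z $ p \<noteq> 0) \<longrightarrow> psi a z \<le> \<Phi> z"
proof -
  interpret s: setting2 a \<Phi>
    by (intro setting2.intro setting.intro setting2_axioms.intro) (use assms in auto)
  show ?thesis using s.final by blast
qed

end
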